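(* Let $\chi:\mathcal H\to\mathcal H_L^\chi\otimes\mathcal H_R^\chi$ be a balanced splitting map such that $\mathcal A=\mathrm{stloc}_L(\chi)$ is a factor. Then there exist finite index sets $L,R,M$, an orthonormal basis $\{e_{l,r}\}_{(l,r)\in L\times R}$ of $\mathcal H$, an orthonormal family $\{f_{l,m}\}_{(l,m)\in L\times M}$ in $\mathcal H_L^\chi$, an orthonormal family $\{g_{r,m}\}_{(r,m)\in R\times M}$ in $\mathcal H_R^\chi$, and complex numbers $(\lambda_m)_{m\in M}$ such that $\chi(e_{l,r})=\sum_{m\in M}\lambda_m\,f_{l,m}\otimes g_{r,m}$ for all $l,r$.
   Context: All Hilbert spaces are finite-dimensional and complex. A splitting map on $\mathcal H$ is an isometry $\chi:\mathcal H\to\mathcal H_L^\chi\otimes\mathcal H_R^\chi$. $A\in\mathcal L(\mathcal H)$ is strictly left $\chi$-local if there is $\tilde A\in\mathcal L(\mathcal H_L^\chi)$ with $A\chi^\dagger=\chi^\dagger(\tilde A\otimes\mathbb 1)$ and $\chi A=(\tilde A\otimes\mathbb 1)\chi$ (set $\mathrm{stloc}_L(\chi)$); strictly right $\chi$-local is defined symmetrically with $\mathbb 1\otimes\tilde A$, $\tilde A\in\mathcal L(\mathcal H_R^\chi)$ (set $\mathrm{stloc}_R(\chi)$). $\chi$ is balanced if $\mathrm{stloc}_R(\chi)=\mathrm{stloc}_L(\chi)'$ (commutant in $\mathcal L(\mathcal H)$). A Von Neumann algebra $\mathcal A\subseteq\mathcal L(\mathcal H)$ is a factor if $\mathcal A\cap\mathcal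 A'=\mathbb C\mathbb 1_{\mathcal H}$. *)

theory Defs
  imports "HOL-Analysis.Analysis"
begin

text \<open>Finite-dimensional complex Hilbert spaces are modelled as coordinate spaces
  complex^'n over a finite index type 'n, with the standard inner product
  (antilinear in the first argument).
  The tensor product H_L (x) H_R is complex^('l * 'r).\<close>

definition cinner :: "complex^'n::finite \<Rightarrow> complex^'n \<Rightarrow> complex" where
  "cinner x y = (\<Sum>i\<in>UNIV. cnj (x $ i) * y $ i)"

definition cadj :: "complex^'n::finite^'m::finite \<Rightarrow> complex^'m^'n" where
  "cadj A = (\<chi> i j. cnj (A $ j $ i))"

definition tensor_vec :: "complex^'l::finite \<Rightarrow> complex^'r::finite \<Rightarrow> complex^('l \<times> 'r)" where
  "tensor_vec f g = (\<chi> p. f $ fst p * g $ snd p)"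

definition tensor_op :: "complex^'l::finite^'l \<Rightarrow> complex^'r::finite^'r \<Rightarrow> complex^('l \<times> 'r)^('l \<times> 'r)" where
  "tensor_op A B = (\<chi> p q. A $ fst p $ fst q * B $ snd p $ snd q)"

definition splitting_map :: "complex^'h::finite^('l::finite \<times> 'r::finite) \<Rightarrow> bool" where
  "splitting_map X \<longleftrightarrow> cadj X ** X = mat 1"

definition stloc_L :: "complex^'h::finite^('l::finite \<times> 'r::finite) \<Rightarrow> (complex^'h^'h) set" where
  "stloc_L X = {A. \<exists>At :: complex^'l^'l.
      A ** cadj X = cadj X ** tensor_op At (mat 1) \<and> X ** A = tensor_op At (mat 1) ** X}"

definition stloc_R :: "complex^'h::finite^('l::finite \<times> 'r::finite) \<Rightarrow> (complex^'h^'h) set" where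
  "stloc_R X = {A. \<exists>At :: complex^'r^'r.
      A ** cadj X = cadj X ** tensor_op (mat 1) At \<and> X ** A = tensor_op (mat 1) At ** X}"

definition commutant :: "(complex^'h::finite^'h) set \<Rightarrow> (complex^'h^'h) set" where
  "commutant S = {B. \<forall>A\<in>S. A ** B = B ** A}"

definition balanced :: "complex^'h::finite^('l::finite \<times> 'r::finite) \<Rightarrow> bool" where
  "balanced X \<longleftrightarrow> stloc_R X = commutant (stloc_L X)"

definition von_neumann_algebra :: "(complex^'h::finite^'h) set \<Rightarrow> bool" where
  "von_neumann_algebra S \<longleftrightarrow> (\<forall>A\<in>S. cadj A \<in> S) \<and> commutant (commutant S) = S"

definition factor :: "(complex^'h::finite^'h) set \<Rightarrow> bool" where
  "factor S \<longleftrightarrow> von_neumann_algebra S \<and> S \<inter> commutant S = range mat"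

end

theory Submission
  imports Defs
begin


lemma cinner_add_right: "cinner x (y + z) = cinner x y + cinner x z"
  by (simp add: cinner_def sum.distrib distrib_left)
lemma cinner_add_left: "cinner (x + y) z = cinner x z + cinner y z"
  by (simp add: cinner_def sum.distrib distrib_right)
lemma cinner_diff_right: "cinner x (y - z) = cinner x y - cinner x z"
  by (simp add: cinner_def sum_subtractf right_diff_distrib)
lemma cinner_diff_left: "cinner (x - y) z = cinner x z - cinner y z"
  by (simp add: cinner_def sum_subtractf left_diff_distrib)
lemma cinner_scale_right: "cinner x (c *s y) = c * cinner x y"
  by (simp add: cinner_def sum_distrib_left mult_ac)
lemma cinner_scale_left: "cinner (c *s x) y = cnj c * cinner x y"
  by (simp add: cinner_def sum_distrib_left mult_ac)
lemma cinner_zero_right[simp]: "cinner x 0 = 0"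
  by (simp add: cinner_def)
lemma cinner_zero_left[simp]: "cinner 0 x = 0"
  by (simp add: cinner_def)
lemma cinner_sum_right: "cinner x (sum f S) = (\<Sum>s\<in>S. cinner x (f s))"
  by (induct S rule: infinite_finite_induct) (auto simp: cinner_add_right)
lemma cinner_sum_left: "cinner (sum f S) x = (\<Sum>s\<in>S. cinner (f s) x)"
  by (induct S rule: infinite_finite_induct) (auto simp: cinner_add_left)
lemma cinner_cnj: "cnj (cinner x y) = cinner y x"
  by (simp add: cinner_def mult.commute)
lemma cinner_adj: "cinner (A *v x) y = cinner x (cadj A *v y)"
  apply (simp add: cinner_def cadj_def matrix_vector_mult_def sum_distrib_left sum_distrib_right)
  apply (subst sum.swap) apply (simp add: mult_ac)
  done


lemma cadj_cadj[simp]: "cadj (cadj A) = A"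
  by (simp add: cadj_def vec_eq_iff)
lemma cinner_adj2: "cinner x (A *v y) = cinner (cadj A *v x) y"
  by (metis cinner_adj cadj_cadj)
lemma cadj_mult: "cadj (A ** B) = cadj B ** cadj A"
  by (simp add: cadj_def matrix_matrix_mult_def vec_eq_iff mult.commute)
lemma cadj_add: "cadj (A + B) = cadj A + cadj B"
  by (simp add: cadj_def vec_eq_iff)
lemma cadj_diff: "cadj (A - B) = cadj A - cadj B"
  by (simp add: cadj_def vec_eq_iff)
lemma cadj_mat[simp]: "cadj (mat c) = mat (cnj c)"
  by (simp add: cadj_def mat_def vec_eq_iff)
lemma cadj_zero[simp]: "cadj 0 = 0"
  by (simp add: cadj_def vec_eq_iff)
lemma cadj_sum: "cadj (sum f S) = (\<Sum>s\<in>S. cadj (f s))"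
  by (induct S rule: infinite_finite_induct) (auto simp: cadj_add)

lemma inner_Re_cinner: "inner x y = Re (cinner x y)"
  by (simp add: inner_vec_def cinner_def inner_complex_def)

lemma cinner_self_norm: "cinner x x = complex_of_real ((norm x)^2)"
proof -
  have "(norm x)^2 = inner x x" by (simp add: power2_norm_eq_inner)
  also have "\<dots> = Re (cinner x x)" by (simp add: inner_Re_cinner)
  finally have 1: "Re (cinner x x) = (norm x)^2" by simp
  have "Im (cinner x x) = 0"
    by (simp add: cinner_def)
  then show ?thesis using 1 by (simp add: complex_eq_iff)
qed

lemma cinner_self_eq0[simp]: "cinner x x = 0 \<longleftrightarrow> x = 0"
  by (simp add: cinner_self_norm)

lemma cinner_commute_cnj: "cinner y x = cnj (cinner x y)"
  by (simp add: cinner_cnj)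

lemma mvec_scale: "(A::complex^'n^'m) *v (c *s x) = c *s (A *v x)"
  by (simp add: matrix_vector_mult_def vec_eq_iff sum_distrib_left mult_ac)
lemma mvec_sum: "A *v (sum f S) = (\<Sum>s\<in>S. A *v f s)"
  by (induct S rule: infinite_finite_induct) (auto simp: matrix_vector_right_distrib)
lemma mvec_sum_left: "(sum f S) *v x = (\<Sum>s\<in>S. f s *v x)"
  by (induct S rule: infinite_finite_induct) (auto simp: matrix_vector_mult_add_rdistrib)

lemma mvec_mat[simp]: "mat c *v x = c *s x"
  by (simp add: matrix_vector_mult_def mat_def vec_eq_iff if_distrib if_distribR cong: if_cong)

definition smat :: "complex \<Rightarrow> complex^'n^'m \<Rightarrow> complex^'n^'m" where
  "smat c A = (\<chi> i j. c * A$i$j)"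

lemma smat_mvec: "smat c A *v x = c *s (A *v x)"
  by (simp add: smat_def matrix_vector_mult_def vec_eq_iff sum_distrib_left mult_ac)
lemma smat_mult_left: "smat c A ** B = smat c (A ** B)"
  by (simp add: smat_def matrix_matrix_mult_def vec_eq_iff sum_distrib_left mult_ac)
lemma smat_mult_right: "A ** smat c B = smat c (A ** B)"
  by (simp add: smat_def matrix_matrix_mult_def vec_eq_iff sum_distrib_left mult_ac)
lemma cadj_smat: "cadj (smat c A) = smat (cnj c) (cadj A)"
  by (simp add: smat_def cadj_def vec_eq_iff)
lemma smat_smat: "smat c (smat d A) = smat (c*d) A"
  by (simp add: smat_def vec_eq_iff)
lemma smat_one[simp]: "smat 1 A = A"
  by (simp add: smat_def vec_eq_iff)
lemma smat_mat: "smat c (mat 1) = mat c"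
  by (simp add: smat_def mat_def vec_eq_iff)
lemma smat_add: "smat c (A + B) = smat c A + smat c B"
  by (simp add: smat_def vec_eq_iff algebra_simps)
lemma smat_diff: "smat c (A - B) = smat c A - smat c B"
  by (simp add: smat_def vec_eq_iff algebra_simps)
lemma smat_zero[simp]: "smat 0 A = 0"  "smat c 0 = 0"
  by (simp_all add: smat_def vec_eq_iff)

lemma mat_eq_iff: "A = (B::complex^'n^'m) \<longleftrightarrow> (\<forall>x. A *v x = B *v x)"
  by (rule matrix_eq)

lemma mat_one_neq0: "mat 1 \<noteq> (0::complex^'n^'n)"
proof
  assume "mat 1 = (0::complex^'n^'n)"
  then have "(mat 1::complex^'n^'n) $ undefined $ undefined = 0" by simp
  then show False by (simp add: mat_def)
qed

lemma adj_zero_iff: "cadj A ** A = 0 \<longleftrightarrow> (A::complex^'n^'m) = 0"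
proof
  assume h: "cadj A ** A = 0"
  have "A *v x = 0" for x
  proof -
    have "cinner (A *v x) (A *v x) = cinner x ((cadj A ** A) *v x)"
      by (simp add: cinner_adj matrix_vector_mul_assoc)
    then show ?thesis using h by simp
  qed
  then show "A = 0" by (simp add: mat_eq_iff)
qed simp

lemma cnj_vec_cinner: "cinner (\<chi> i. cnj (x$i)) (\<chi> i. cnj (y$i)) = cnj (cinner x y)"
  by (simp add: cinner_def mult.commute)


definition csubspace :: "(complex^'n::finite) set \<Rightarrow> bool" where
  "csubspace S \<longleftrightarrow> 0 \<in> S \<and> (\<forall>x\<in>S. \<forall>y\<in>S. x + y \<in> S) \<and> (\<forall>c. \<forall>x\<in>S. c *s x \<in> S)"

definition orthonormal :: "(complex^'n::finite) set \<Rightarrow> bool" where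
  "orthonormal B \<longleftrightarrow> (\<forall>b\<in>B. cinner b b = 1) \<and> (\<forall>b\<in>B. \<forall>b'\<in>B. b \<noteq> b' \<longrightarrow> cinner b b' = 0)"

lemma csubspace_0: "csubspace S \<Longrightarrow> 0 \<in> S" by (simp add: csubspace_def)
lemma csubspace_add: "csubspace S \<Longrightarrow> x \<in> S \<Longrightarrow> y \<in> S \<Longrightarrow> x + y \<in> S" by (simp add: csubspace_def)
lemma csubspace_scale: "csubspace S \<Longrightarrow> x \<in> S \<Longrightarrow> c *s x \<in> S" by (simp add: csubspace_def)
lemma csubspace_diff: "csubspace S \<Longrightarrow> x \<in> S \<Longrightarrow> y \<in> S \<Longrightarrow> x - y \<in> S"
proof -
  assume a: "csubspace S" "x \<in> S" "y \<in> S"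
  have e: "x - y = x + (-1) *s y" by (simp add: vec_eq_iff)
  show ?thesis unfolding e using a csubspace_add csubspace_scale by blast
qed
lemma csubspace_sum: "csubspace S \<Longrightarrow> (\<And>t. t \<in> T \<Longrightarrow> f t \<in> S) \<Longrightarrow> sum f T \<in> S"
  by (induct T rule: infinite_finite_induct) (auto simp: csubspace_def)

lemma scaleR_vec_complex: "r *\<^sub>R (x::complex^'n) = complex_of_real r *s x"
  unfolding scaleR_vec_def vector_scalar_mult_def by (simp add: vec_eq_iff scaleR_conv_of_real)

lemma norm_ofreal_scale: "norm (complex_of_real r *s (x::complex^'n::finite)) = \<bar>r\<bar> * norm x"
  by (metis scaleR_vec_complex norm_scaleR)

lemma csubspace_subspace: "csubspace S \<Longrightarrow> subspace S"
  by (auto simp: subspace_def csubspace_def scaleR_vec_complex)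

lemma orthonormal_indep:
  fixes B :: "(complex^'n::finite) set"
  assumes "orthonormal B" shows "finite B \<and> card B \<le> DIM(complex^'n)"
proof -
  have "pairwise orthogonal B"
    using assms by (auto simp: pairwise_def orthogonal_def inner_Re_cinner orthonormal_def)
  moreover have "0 \<notin> B" using assms by (auto simp: orthonormal_def)
  ultimately have "independent B" by (rule pairwise_orthogonal_independent)
  then show ?thesis by (metis independent_bound)
qed

lemma quad_nonpos: fixes a b :: real assumes "\<And>t. a*t^2 + b*t \<le> 0" shows "b = 0"
proof -
  define t where "t = b / (\<bar>a\<bar> + 1)"
  have pos: "\<bar>a\<bar> + 1 > 0" by simp
  have "a*t^2 + b*t \<le> 0" by (rule assms)
  then have "(a*t^2 + b*t) * (\<bar>a\<bar> + 1)^2 \<le> 0"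
    by (simp add: mult_nonpos_nonneg)
  moreover have "(a*t^2 + b*t) * (\<bar>a\<bar> + 1)^2 = b^2 * (a + \<bar>a\<bar> + 1)"
  proof -
    have tc: "t * (\<bar>a\<bar> + 1) = b" using pos by (simp add: t_def)
    have "(a*t^2 + b*t) * (\<bar>a\<bar> + 1)^2 = a*(t*(\<bar>a\<bar> + 1))^2 + b*(t*(\<bar>a\<bar> + 1))*(\<bar>a\<bar> + 1)"
      by (simp add: power2_eq_square algebra_simps)
    also have "\<dots> = b^2 * (a + \<bar>a\<bar> + 1)" unfolding tc by (simp add: power2_eq_square algebra_simps)
    finally show ?thesis .
  qed
  ultimately have "b^2 * (a + \<bar>a\<bar> + 1) \<le> 0" by simp
  moreover have "a + \<bar>a\<bar> + 1 > 0" by simp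
  ultimately have "b^2 \<le> 0" by (simp add: mult_le_0_iff)
  then show ?thesis by simp
qed

lemma cinner_self_real: "complex_of_real (Re (cinner x x)) = cinner x x"
  by (simp add: cinner_self_norm)

lemma Re_cinner_self_eq0: "Re (cinner x x) = 0 \<longleftrightarrow> x = 0"
  by (simp add: cinner_self_norm)

lemma norm1_iff: "norm x = 1 \<longleftrightarrow> cinner x x = 1"
proof -
  have "cinner x x = 1 \<longleftrightarrow> (norm x)^2 = 1" by (metis cinner_self_norm of_real_1 of_real_eq_iff)
  also have "\<dots> \<longleftrightarrow> norm x = 1" by (simp add: power2_eq_1_iff) (use norm_ge_zero[of x] in linarith)
  finally show ?thesis by simp
qed

lemma Re_cnj_eq: "Re (cnj z) = Re z" by simp

lemma cont_nth[continuous_intros]: "continuous_on S (\<lambda>x::'a::real_normed_vector^'n. x $ i)"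
  by (rule linear_continuous_on[OF bounded_linear_vec_nth])

lemma hermitian_eigvec:
  fixes h :: "complex^'n::finite^'n"
  assumes S: "csubspace S" and ne: "S \<noteq> {0}" and herm: "cadj h = h" and inv: "\<forall>v\<in>S. h *v v \<in> S"
  shows "\<exists>w\<in>S. cinner w w = 1 \<and> (\<exists>\<mu>::real. h *v w = complex_of_real \<mu> *s w)"
proof -
  define f where "f w = Re (cinner w (h *v w))" for w
  define K where "K = sphere (0::complex^'n) 1 \<inter> S"
  have "compact K" unfolding K_def
    using closed_subspace[OF csubspace_subspace[OF S]] by (intro compact_Int_closed) auto
  obtain w0 where w0: "w0 \<in> S" "w0 \<noteq> 0" using ne S csubspace_0 by blast
  define w1 where "w1 = complex_of_real (1 / norm w0) *s w0"
  have "w1 \<in> S" unfolding w1_def using S w0 csubspace_scale by blast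
  moreover have "norm w1 = 1" unfolding w1_def norm_ofreal_scale using w0 by simp
  ultimately have "K \<noteq> {}" unfolding K_def by auto
  have "continuous_on K f" unfolding f_def cinner_def matrix_vector_mult_def
    by (intro continuous_intros)
  then obtain w where wK: "w \<in> K" and wmax: "\<And>y. y \<in> K \<Longrightarrow> f y \<le> f w"
    using continuous_attains_sup[OF \<open>compact K\<close> \<open>K \<noteq> {}\<close>] by blast
  have wS: "w \<in> S" and ww: "cinner w w = 1" using wK by (auto simp: K_def norm1_iff)
  define \<mu> where "\<mu> = f w"
  have fscale: "f (complex_of_real c *s y) = c^2 * f y" for c y
    by (simp add: f_def mvec_scale cinner_scale_left cinner_scale_right power2_eq_square)
  have cscale: "Re (cinner (complex_of_real c *s y) (complex_of_real c *s y)) = c^2 * Re (cinner y y)" for c y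
    by (simp add: cinner_scale_left cinner_scale_right power2_eq_square)
  have key: "f z \<le> \<mu> * Re (cinner z z)" if "z \<in> S" for z
  proof (cases "z = 0")
    case True then show ?thesis by (simp add: f_def)
  next
    case False
    define n where "n = norm z"
    have n: "n > 0" using False by (simp add: n_def)
    define z' where "z' = complex_of_real (1/n) *s z"
    have "norm z' = 1" unfolding z'_def norm_ofreal_scale using n by (simp add: n_def)
    then have "z' \<in> K" unfolding K_def z'_def using that S csubspace_scale by auto
    then have "f z' \<le> \<mu>" using wmax \<mu>_def by auto
    moreover have "z = complex_of_real n *s z'" using n by (simp add: z'_def vec_eq_iff)
    ultimately have "f z \<le> n^2 * \<mu>" using fscale n by (simp add: mult_left_mono)
    moreover have "Re (cinner z z) = n^2" by (simp add: cinner_self_norm n_def)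
    ultimately show ?thesis by (simp add: mult.commute)
  qed
  have herm2: "cinner x (h *v y) = cinner (h *v x) y" for x y
    using cinner_adj2[of x h y] herm by simp
  have orth: "Re (cinner u (h *v w - complex_of_real \<mu> *s w)) = 0" if uS: "u \<in> S" for u
  proof -
    define a where "a = f u - \<mu> * Re (cinner u u)"
    define b where "b = Re (cinner u (h *v w - complex_of_real \<mu> *s w))"
    have "a * t^2 + (2*b) * t \<le> 0" for t
    proof -
      have zS: "w + complex_of_real t *s u \<in> S" using S wS uS csubspace_add csubspace_scale by blast
      have e1: "Re (cinner w (h *v u)) = Re (cinner u (h *v w))"
        using herm2[of w u] cinner_cnj[of "h *v w" u] by (metis complex_cnj_cnj Re_cnj_eq)
      have e2: "Re (cinner w u) = Re (cinner u w)"
        by (metis cinner_cnj Re_cnj_eq)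
      have "f (w + complex_of_real t *s u) = f w + 2 * t * Re (cinner u (h *v w)) + t^2 * f u"
        unfolding f_def
        by (simp add: matrix_vector_right_distrib mvec_scale cinner_add_left cinner_add_right
            cinner_scale_left cinner_scale_right e1 power2_eq_square algebra_simps)
      moreover have "Re (cinner (w + complex_of_real t *s u) (w + complex_of_real t *s u))
          = 1 + 2 * t * Re (cinner u w) + t^2 * Re (cinner u u)"
        by (simp add: cinner_add_left cinner_add_right ww
            cinner_scale_left cinner_scale_right e2 power2_eq_square algebra_simps)
      ultimately have "f w + 2 * t * Re (cinner u (h *v w)) + t^2 * f u
          \<le> \<mu> * (1 + 2 * t * Re (cinner u w) + t^2 * Re (cinner u u))"
        using key[OF zS] by simp
      moreover have "b = Re (cinner u (h *v w)) - \<mu> * Re (cinner u w)"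
        by (simp add: b_def cinner_diff_right cinner_scale_right)
      ultimately have i1: "f w + 2 * t * (b + \<mu> * Re (cinner u w)) + t^2 * f u
          \<le> \<mu> * (1 + 2 * t * Re (cinner u w) + t^2 * Re (cinner u u))" by simp
      have "a * t^2 + (2*b) * t = (f w + 2 * t * (b + \<mu> * Re (cinner u w)) + t^2 * f u)
          - \<mu> * (1 + 2 * t * Re (cinner u w) + t^2 * Re (cinner u u))"
        unfolding a_def \<mu>_def by (simp add: algebra_simps)
      then show ?thesis using i1 by linarith
    qed
    then have "2*b = 0" by (rule quad_nonpos)
    then show ?thesis by (simp add: b_def)
  qed
  define u where "u = h *v w - complex_of_real \<mu> *s w"
  have "u \<in> S" unfolding u_def using S wS inv csubspace_diff csubspace_scale by blast
  then have "Re (cinner u u) = 0" using orth u_def by simp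
  then have "u = 0" by (simp add: Re_cinner_self_eq0)
  then have "h *v w = complex_of_real \<mu> *s w" by (simp add: u_def)
  then show ?thesis using wS ww by blast
qed


lemma orth_sum_delta:
  assumes on: "orthonormal B" and fin: "finite B" and b': "b' \<in> B"
  shows "(\<Sum>b\<in>B. c b * cinner b' b) = c b'"
proof -
  have "(\<Sum>b\<in>B. c b * cinner b' b) = (\<Sum>b\<in>B. if b' = b then c b else 0)"
    using on b' by (intro sum.cong) (auto simp: orthonormal_def)
  then show ?thesis using fin b' by simp
qed

lemma onb_exists:
  fixes h :: "complex^'n::finite^'n"
  assumes S: "csubspace S" and herm: "cadj h = h" and inv: "\<forall>v\<in>S. h *v v \<in> S"
  shows "\<exists>B. finite B \<and> B \<subseteq> S \<and> orthonormal B \<and> (\<forall>v\<in>S. v = (\<Sum>b\<in>B. cinner b v *s b))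
     \<and> (\<forall>b\<in>B. \<exists>\<mu>::real. h *v b = complex_of_real \<mu> *s b)"
proof -
  define P where "P B \<longleftrightarrow> B \<subseteq> S \<and> orthonormal B \<and> (\<forall>b\<in>B. \<exists>\<mu>::real. h *v b = complex_of_real \<mu> *s b)"
    for B :: "(complex^'n) set"
  define N where "N = card ` {B. P B}"
  have P0: "P {}" by (simp add: P_def orthonormal_def)
  have bnd: "\<forall>n\<in>N. n \<le> DIM(complex^'n)" using orthonormal_indep by (auto simp: N_def P_def)
  then have finN: "finite N" using finite_nat_set_iff_bounded_le by blast
  have neN: "N \<noteq> {}" using P0 N_def by auto
  obtain B where PB: "P B" and cardB: "card B = Max N" using Max_in[OF finN neN] N_def by auto
  have maxB: "card B' \<le> card B" if "P B'" for B' using Max_ge[OF finN] N_def cardB that by auto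
  have onB: "orthonormal B" and BS: "B \<subseteq> S" and eigB: "\<forall>b\<in>B. \<exists>\<mu>::real. h *v b = complex_of_real \<mu> *s b"
    using PB by (auto simp: P_def)
  have finB: "finite B" using onB orthonormal_indep by blast
  have span: "\<forall>v\<in>S. v = (\<Sum>b\<in>B. cinner b v *s b)"
  proof (rule ballI, rule ccontr)
    fix v assume vS: "v \<in> S" and ne: "v \<noteq> (\<Sum>b\<in>B. cinner b v *s b)"
    define r where "r = v - (\<Sum>b\<in>B. cinner b v *s b)"
    have r0: "r \<noteq> 0" using ne r_def by simp
    have rS: "r \<in> S" unfolding r_def using S vS BS
      by (intro csubspace_diff csubspace_sum csubspace_scale) auto
    have orth_r: "cinner b' r = 0" if "b' \<in> B" for b'
    proof -
      have "cinner b' r = cinner b' v - (\<Sum>b\<in>B. cinner b v * cinner b' b)"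
        by (simp add: r_def cinner_diff_right cinner_sum_right cinner_scale_right)
      also have "\<dots> = 0" using orth_sum_delta[OF onB finB that] by simp
      finally show ?thesis .
    qed
    define S' where "S' = {x\<in>S. \<forall>b\<in>B. cinner b x = 0}"
    have S': "csubspace S'" using S unfolding S'_def csubspace_def
      by (auto simp: cinner_add_right cinner_scale_right)
    have "r \<in> S'" using rS orth_r S'_def by auto
    then have neS': "S' \<noteq> {0}" using r0 by auto
    have herm2: "cinner x (h *v y) = cinner (h *v x) y" for x y
      using cinner_adj2[of x h y] herm by simp
    have inv': "\<forall>x\<in>S'. h *v x \<in> S'"
    proof
      fix x assume x: "x \<in> S'"
      have "cinner b (h *v x) = 0" if b: "b \<in> B" for b
      proof -
        obtain \<mu> :: real where "h *v b = complex_of_real \<mu> *s b" using eigB b by blast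
        then have "cinner b (h *v x) = cnj (complex_of_real \<mu>) * cinner b x"
          by (simp add: herm2 cinner_scale_left)
        then show ?thesis using x b S'_def by simp
      qed
      then show "h *v x \<in> S'" using x inv S'_def by auto
    qed
    obtain w where wS': "w \<in> S'" and ww: "cinner w w = 1"
      and weig: "\<exists>\<mu>::real. h *v w = complex_of_real \<mu> *s w"
      using hermitian_eigvec[OF S' neS' herm inv'] by blast
    have wB: "w \<notin> B" using wS' ww S'_def by force
    have "P (insert w B)"
    proof -
      have "orthonormal (insert w B)"
        unfolding orthonormal_def
      proof (intro conjI ballI impI)
        fix b assume "b \<in> insert w B" then show "cinner b b = 1"
          using onB ww by (auto simp: orthonormal_def)
      next
        fix b b' assume b: "b \<in> insert w B" and b': "b' \<in> insert w B" and ne: "b \<noteq> b'"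
        have wb: "cinner w x = 0" if "x \<in> B" for x
        proof -
          have "cinner x w = 0" using wS' that unfolding S'_def by blast
          then show ?thesis using cinner_cnj[of x w] by simp
        qed
        show "cinner b b' = 0"
          using b b' ne onB wS' S'_def wb by (auto simp: orthonormal_def)
      qed
      then show ?thesis using PB wS' S'_def weig by (auto simp: P_def)
    qed
    then have "card (insert w B) \<le> card B" by (rule maxB)
    then show False using wB finB by simp
  qed
  show ?thesis using finB BS onB span eigB by blast
qed

definition outer :: "complex^'n::finite \<Rightarrow> complex^'n \<Rightarrow> complex^'n^'n" where
  "outer u w = (\<chi> i j. u$i * cnj (w$j))"

lemma outer_mvec: "outer u w *v v = cinner w v *s u"
  by (simp add: outer_def matrix_vector_mult_def cinner_def vec_eq_iff sum_distrib_left mult_ac)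

lemma cadj_outer: "cadj (outer u w) = outer w u"
  by (simp add: outer_def cadj_def vec_eq_iff mult.commute)

lemma proj_exists:
  fixes S :: "(complex^'n::finite) set"
  assumes S: "csubspace S" and inv: "\<forall>T\<in>TT. \<forall>v\<in>S. T *v v \<in> S" and adjc: "\<forall>T\<in>TT. cadj T \<in> TT"
  shows "\<exists>P. cadj P = P \<and> P ** P = P \<and> (\<forall>v. P *v v \<in> S) \<and> (\<forall>v\<in>S. P *v v = v)
     \<and> (\<forall>T\<in>TT. T ** P = P ** T)"
proof -
  have "cadj (0::complex^'n^'n) = 0" by simp
  moreover have "\<forall>v\<in>S. (0::complex^'n^'n) *v v \<in> S" using csubspace_0[OF S] by simp
  ultimately obtain B where finB: "finite B" and BS: "B \<subseteq> S" and onB: "orthonormal B"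
    and span: "\<forall>v\<in>S. v = (\<Sum>b\<in>B. cinner b v *s b)"
    using onb_exists[OF S, of 0] by blast
  define P where "P = (\<Sum>b\<in>B. outer b b)"
  have Pv: "P *v v = (\<Sum>b\<in>B. cinner b v *s b)" for v
    by (simp add: P_def mvec_sum_left outer_mvec)
  have PS: "P *v v \<in> S" for v unfolding Pv using S BS by (intro csubspace_sum csubspace_scale) auto
  have Pid: "P *v v = v" if "v \<in> S" for v using span that Pv by simp
  have Padj: "cadj P = P" by (simp add: P_def cadj_sum cadj_outer)
  have PP: "P ** P = P" by (simp add: mat_eq_iff matrix_vector_mul_assoc[symmetric] Pid PS)
  have Pzero: "P *v y = 0" if "\<forall>b\<in>B. cinner b y = 0" for y
    unfolding Pv using that by simp
  have orth: "cinner b (v - P *v v) = 0" if "b \<in> B" for b v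
  proof -
    have "cinner b (P *v v) = (\<Sum>b'\<in>B. cinner b' v * cinner b b')"
      by (simp add: Pv cinner_sum_right cinner_scale_right)
    also have "\<dots> = cinner b v" by (rule orth_sum_delta[OF onB finB that])
    finally show ?thesis by (simp add: cinner_diff_right)
  qed
  have comm: "T ** P = P ** T" if T: "T \<in> TT" for T
  proof -
    have "(T ** P) *v v = (P ** T) *v v" for v
    proof -
      define y where "y = v - P *v v"
      have 1: "P *v (T *v (P *v v)) = T *v (P *v v)" using Pid inv T PS by blast
      have "cinner b (T *v y) = 0" if b: "b \<in> B" for b
      proof -
        have "cinner b (T *v y) = cinner (cadj T *v b) y" by (rule cinner_adj2)
        moreover have "cadj T *v b \<in> S" using inv adjc T b BS by blast
        moreover have "cinner s y = 0" if "s \<in> S" for s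
        proof -
          have "cinner s y = cinner (\<Sum>b\<in>B. cinner b s *s b) y" using span that by simp
          also have "\<dots> = 0" by (simp add: cinner_sum_left cinner_scale_left orth y_def)
          finally show ?thesis .
        qed
        ultimately show ?thesis by simp
      qed
      then have 2: "P *v (T *v y) = 0" using Pzero by blast
      have "v = P *v v + y" by (simp add: y_def)
      then have "P *v (T *v v) = P *v (T *v (P *v v)) + P *v (T *v y)"
        by (metis matrix_vector_right_distrib)
      then show ?thesis using 1 2 by (simp add: matrix_vector_mul_assoc[symmetric])
    qed
    then show ?thesis by (simp add: mat_eq_iff)
  qed
  show ?thesis using Padj PP PS Pid comm by blast
qed


lemmas mvsimps = matrix_vector_mul_assoc[symmetric] matrix_vector_mult_add_rdistrib
  matrix_vector_mult_diff_rdistrib smat_mvec mvec_mat matrix_vector_right_distrib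
  matrix_vector_mult_diff_distrib mvec_scale

lemma mm_add_left: "((A::complex^'n::finite^'m::finite) + B) ** C = A ** C + B ** C"
  by (simp add: mat_eq_iff mvsimps)
lemma mm_add_right: "(C::complex^'n::finite^'m::finite) ** (A + B) = C ** A + C ** B"
  by (simp add: mat_eq_iff mvsimps)
lemma mm_diff_left: "((A::complex^'n::finite^'m::finite) - B) ** C = A ** C - B ** C"
  by (simp add: mat_eq_iff mvsimps)
lemma mm_diff_right: "(C::complex^'n::finite^'m::finite) ** (A - B) = C ** A - C ** B"
  by (simp add: mat_eq_iff mvsimps)
lemma mm_mat_left: "mat c ** (A::complex^'n::finite^'m::finite) = smat c A"
  by (simp add: mat_eq_iff mvsimps)
lemma mm_mat_right: "(A::complex^'n::finite^'m::finite) ** mat c = smat c A"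
  by (simp add: mat_eq_iff mvsimps)

lemma mv_eq: "A ** B = C \<Longrightarrow> A *v (B *v x) = C *v x"
  by (metis matrix_vector_mul_assoc)

definition isproj :: "complex^'n::finite^'n \<Rightarrow> bool" where
  "isproj p \<longleftrightarrow> cadj p = p \<and> p ** p = p"

lemma comm_mat: "mat c \<in> commutant S"
  by (simp add: commutant_def mm_mat_left mm_mat_right)
lemma comm_mult: "a \<in> commutant S \<Longrightarrow> b \<in> commutant S \<Longrightarrow> a ** b \<in> commutant S"
  by (auto simp: commutant_def) (metis matrix_mul_assoc)
lemma comm_add: "a \<in> commutant S \<Longrightarrow> b \<in> commutant S \<Longrightarrow> a + b \<in> commutant S"
  by (auto simp: commutant_def mm_add_left mm_add_right)
lemma comm_diff: "a \<in> commutant S \<Longrightarrow> b \<in> commutant S \<Longrightarrow> a - b \<in> commutant S"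
  by (auto simp: commutant_def mm_diff_left mm_diff_right)
lemma comm_smat: "a \<in> commutant S \<Longrightarrow> smat c a \<in> commutant S"
  by (auto simp: commutant_def smat_mult_left smat_mult_right)

lemma vn_eq: "von_neumann_algebra A \<Longrightarrow> commutant (commutant A) = A"
  by (simp add: von_neumann_algebra_def)
lemma vn_adj: "von_neumann_algebra A \<Longrightarrow> a \<in> A \<Longrightarrow> cadj a \<in> A"
  by (simp add: von_neumann_algebra_def)
lemma vn_mat: "von_neumann_algebra A \<Longrightarrow> mat c \<in> A"
  by (metis vn_eq comm_mat)
lemma vn_mult: "von_neumann_algebra A \<Longrightarrow> a \<in> A \<Longrightarrow> b \<in> A \<Longrightarrow> a ** b \<in> A"
  by (metis vn_eq comm_mult)
lemma vn_add: "von_neumann_algebra A \<Longrightarrow> a \<in> A \<Longrightarrow> b \<in> A \<Longrightarrow> a + b \<in> A"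
  by (metis vn_eq comm_add)
lemma vn_diff: "von_neumann_algebra A \<Longrightarrow> a \<in> A \<Longrightarrow> b \<in> A \<Longrightarrow> a - b \<in> A"
  by (metis vn_eq comm_diff)
lemma vn_smat: "von_neumann_algebra A \<Longrightarrow> a \<in> A \<Longrightarrow> smat c a \<in> A"
  by (metis vn_eq comm_smat)
lemma vn_comm_adj: "von_neumann_algebra A \<Longrightarrow> b \<in> commutant A \<Longrightarrow> cadj b \<in> commutant A"
proof -
  assume vn: "von_neumann_algebra A" and b: "b \<in> commutant A"
  have "a ** cadj b = cadj b ** a" if a: "a \<in> A" for a
  proof -
    have "cadj a \<in> A" using vn a vn_adj by blast
    then have "cadj a ** b = b ** cadj a" using b by (simp add: commutant_def)
    then have "cadj (cadj a ** b) = cadj (b ** cadj a)" by simp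
    then show ?thesis by (simp add: cadj_mult)
  qed
  then show ?thesis by (simp add: commutant_def)
qed

lemma comm_elem: "b \<in> commutant A \<Longrightarrow> a \<in> A \<Longrightarrow> a ** b = b ** a"
  by (simp add: commutant_def)

lemma proj_in_vn:
  fixes A :: "(complex^'n::finite^'n) set"
  assumes vn: "von_neumann_algebra A" and S: "csubspace S"
    and inv: "\<forall>T\<in>commutant A. \<forall>v\<in>S. T *v v \<in> S"
  shows "\<exists>P\<in>A. isproj P \<and> (\<forall>v. P *v v \<in> S) \<and> (\<forall>v\<in>S. P *v v = v)"
proof -
  obtain P where P: "cadj P = P" "P ** P = P" "\<forall>v. P *v v \<in> S" "\<forall>v\<in>S. P *v v = v"
    "\<forall>T\<in>commutant A. T ** P = P ** T"
    using proj_exists[OF S inv] vn_comm_adj[OF vn] by blast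
  have "P \<in> commutant (commutant A)" using P(5) by (simp add: commutant_def)
  then have "P \<in> A" using vn_eq[OF vn] by simp
  then show ?thesis using P by (auto simp: isproj_def)
qed

definition rng :: "complex^'n::finite^'n \<Rightarrow> (complex^'n) set" where
  "rng p = {w. p *v w = w}"

definition rk :: "complex^'n::finite^'n \<Rightarrow> nat" where
  "rk p = Max (card ` {B. orthonormal B \<and> B \<subseteq> rng p})"

lemma unit_vec: "w \<noteq> 0 \<Longrightarrow> cinner (complex_of_real (1/norm w) *s w) (complex_of_real (1/norm w) *s w) = 1"
  unfolding norm1_iff[symmetric] norm_ofreal_scale by simp

lemma rk_facts:
  fixes p :: "complex^'n::finite^'n"
  shows "finite (card ` {B. orthonormal B \<and> B \<subseteq> rng p})"
    and "orthonormal B \<Longrightarrow> B \<subseteq> rng p \<Longrightarrow> card B \<le> rk p"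
    and "\<exists>B. orthonormal B \<and> B \<subseteq> rng p \<and> card B = rk p"
proof -
  let ?N = "card ` {B. orthonormal B \<and> B \<subseteq> rng p}"
  have "\<forall>n\<in>?N. n \<le> DIM(complex^'n)" using orthonormal_indep by auto
  then show fin: "finite ?N" using finite_nat_set_iff_bounded_le by blast
  show "orthonormal B \<Longrightarrow> B \<subseteq> rng p \<Longrightarrow> card B \<le> rk p"
    unfolding rk_def using fin by (intro Max_ge) auto
  have "{} \<in> {B. orthonormal B \<and> B \<subseteq> rng p}" by (simp add: orthonormal_def)
  then have "?N \<noteq> {}" by blast
  then show "\<exists>B. orthonormal B \<and> B \<subseteq> rng p \<and> card B = rk p"
    using Max_in[OF fin] unfolding rk_def by auto
qed

lemma proj_le_comm: "isproj p \<Longrightarrow> isproj q \<Longrightarrow> p ** q = q \<Longrightarrow> q ** p = q"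
  unfolding isproj_def by (metis cadj_mult)

lemma rk_less:
  fixes p q :: "complex^'n::finite^'n"
  assumes p: "isproj p" and q: "isproj q" and le: "p ** q = q" and ne: "q \<noteq> p"
  shows "rk q < rk p"
proof -
  obtain B where onB: "orthonormal B" and Bq: "B \<subseteq> rng q" and cB: "card B = rk q"
    using rk_facts(3) by blast
  have qp: "q ** p = q" using proj_le_comm[OF p q le] .
  have "p - q \<noteq> 0" using ne by simp
  then obtain w where "(p - q) *v w \<noteq> 0" by (metis mat_eq_iff matrix_vector_mult_0)
  define u0 where "u0 = (p - q) *v w"
  have u0: "u0 \<noteq> 0" using \<open>(p - q) *v w \<noteq> 0\<close> u0_def by simp
  have pp: "p ** p = p" and qq: "q ** q = q" and pa: "cadj p = p" and qa: "cadj q = q"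
    using p q by (auto simp: isproj_def)
  have qu0: "q *v u0 = 0" unfolding u0_def by (simp add: mvsimps mv_eq[OF qp] mv_eq[OF qq])
  have pu0: "p *v u0 = u0" unfolding u0_def by (simp add: mvsimps mv_eq[OF pp] mv_eq[OF le])
  define u where "u = complex_of_real (1/norm u0) *s u0"
  have uu: "cinner u u = 1" using unit_vec[OF u0] u_def by simp
  have pu: "p *v u = u" by (simp add: u_def mvec_scale pu0)
  have orth: "cinner x u = 0" if "x \<in> rng q" for x
  proof -
    have "cinner x u0 = cinner (q *v x) u0" using that by (simp add: rng_def)
    also have "\<dots> = cinner x (q *v u0)" by (simp add: cinner_adj qa)
    finally show ?thesis by (simp add: u_def cinner_scale_right qu0)
  qed
  have uB: "u \<notin> B" using orth Bq uu by force
  have Bp: "B \<subseteq> rng p"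
  proof
    fix x assume "x \<in> B"
    then have "q *v x = x" using Bq by (auto simp: rng_def)
    then have "p *v x = (p ** q) *v x" by (metis matrix_vector_mul_assoc)
    then show "x \<in> rng p" using le \<open>q *v x = x\<close> by (simp add: rng_def)
  qed
  have on2: "orthonormal (insert u B)"
    unfolding orthonormal_def
  proof (intro conjI ballI impI)
    fix b assume "b \<in> insert u B" then show "cinner b b = 1"
      using onB uu by (auto simp: orthonormal_def)
  next
    fix b b' assume b: "b \<in> insert u B" and b': "b' \<in> insert u B" and ne: "b \<noteq> b'"
    have ub: "cinner u x = 0" if "x \<in> B" for x
    proof -
      have "cinner x u = 0" using orth that Bq by blast
      then show ?thesis using cinner_cnj[of x u] by simp
    qed
    show "cinner b b' = 0" using b b' ne onB ub orth Bq by (auto simp: orthonormal_def)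
  qed
  have "insert u B \<subseteq> rng p" using Bp pu by (auto simp: rng_def)
  then have "card (insert u B) \<le> rk p" using rk_facts(2)[OF on2] by blast
  moreover have "finite B" using onB orthonormal_indep by blast
  ultimately show ?thesis using uB cB by simp
qed

definition minproj :: "(complex^'n::finite^'n) set \<Rightarrow> complex^'n^'n \<Rightarrow> bool" where
  "minproj A p \<longleftrightarrow> p \<in> A \<and> isproj p \<and> p \<noteq> 0 \<and> (\<forall>q\<in>A. isproj q \<and> q \<noteq> 0 \<and> p ** q = q \<longrightarrow> q = p)"

lemma minproj_below:
  fixes r :: "complex^'n::finite^'n"
  assumes r: "r \<in> A" "isproj r" "r \<noteq> 0"
  shows "\<exists>p. minproj A p \<and> r ** p = p"
proof -
  define Q where "Q = {p. p \<in> A \<and> isproj p \<and> p \<noteq> 0 \<and> r ** p = p}"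
  have "r \<in> Q" using r by (simp add: Q_def isproj_def)
  define n where "n = (LEAST n. \<exists>p\<in>Q. rk p = n)"
  have ex: "\<exists>n. \<exists>p\<in>Q. rk p = n" using \<open>r \<in> Q\<close> by blast
  have "\<exists>p\<in>Q. rk p = n" unfolding n_def by (rule LeastI_ex[OF ex])
  then obtain p where pQ: "p \<in> Q" and rkp: "rk p = n" by blast
  have minp: "q = p" if q: "q \<in> A" "isproj q" "q \<noteq> 0" "p ** q = q" for q
  proof (rule ccontr)
    assume ne: "q \<noteq> p"
    have "r ** q = r ** (p ** q)" using q(4) by simp
    also have "\<dots> = (r ** p) ** q" by (simp add: matrix_mul_assoc)
    finally have "r ** q = q" using pQ q(4) by (simp add: Q_def)
    then have "q \<in> Q" using q by (simp add: Q_def)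
    then have "n \<le> rk q" unfolding n_def by (intro Least_le) blast
    moreover have "rk q < rk p" using rk_less[of p q] pQ q ne by (simp add: Q_def)
    ultimately show False using rkp by simp
  qed
  then show ?thesis using pQ by (auto simp: minproj_def Q_def)
qed


lemma pp_right: "p ** p = p \<Longrightarrow> X ** p ** p = X ** p"
  by (metis matrix_mul_assoc)

lemma isproj_D: "isproj p \<Longrightarrow> cadj p = p" "isproj p \<Longrightarrow> p ** p = p"
  by (auto simp: isproj_def)

lemma minproj_D: "minproj A p \<Longrightarrow> p \<in> A" "minproj A p \<Longrightarrow> cadj p = p"
  "minproj A p \<Longrightarrow> p ** p = p" "minproj A p \<Longrightarrow> p \<noteq> 0"
  "minproj A p \<Longrightarrow> q \<in> A \<Longrightarrow> isproj q \<Longrightarrow> q \<noteq> 0 \<Longrightarrow> p ** q = q \<Longrightarrow> q = p"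
  by (auto simp: minproj_def isproj_def)

lemma nonzero_mat_vec: "(M::complex^'n::finite^'m::finite) \<noteq> 0 \<Longrightarrow> \<exists>v. M *v v \<noteq> 0"
  by (metis mat_eq_iff matrix_vector_mult_0)

lemma rng_csubspace: "csubspace (rng p)"
  by (auto simp: rng_def csubspace_def matrix_vector_right_distrib mvec_scale)

lemma herm_in_corner:
  fixes A :: "(complex^'n::finite^'n) set"
  assumes vn: "von_neumann_algebra A" and mp: "minproj A p"
    and hA: "h \<in> A" and hh: "cadj h = h" and php: "p ** h ** p = h"
  shows "\<exists>\<mu>::real. h = smat (complex_of_real \<mu>) p"
proof -
  have pA: "p \<in> A" and pa: "cadj p = p" and pp: "p ** p = p" and p0: "p \<noteq> 0"
    using mp by (auto simp: minproj_D)
  have ph: "p ** h = h"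
  proof -
    have "p ** h = p ** (p ** h ** p)" using php by simp
    also have "\<dots> = (p ** p) ** h ** p" by (simp add: matrix_mul_assoc)
    finally show ?thesis using pp php by simp
  qed
  have hp: "h ** p = h"
  proof -
    have "h ** p = (p ** h ** p) ** p" using php by simp
    also have "\<dots> = p ** h ** (p ** p)" by (simp add: matrix_mul_assoc)
    finally show ?thesis using pp php by simp
  qed
  define S where "S = rng p"
  have S: "csubspace S" unfolding S_def by (rule rng_csubspace)
  have inv: "\<forall>v\<in>S. h *v v \<in> S" by (auto simp: S_def rng_def mv_eq[OF ph])
  obtain v where "p *v v \<noteq> 0" using nonzero_mat_vec[OF p0] by blast
  moreover have "p *v v \<in> S" by (simp add: S_def rng_def mv_eq[OF pp])
  ultimately have neS: "S \<noteq> {0}" by blast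
  obtain w \<mu> where wS: "w \<in> S" and ww: "cinner w w = 1" and hw: "h *v w = complex_of_real \<mu> *s w"
    using hermitian_eigvec[OF S neS hh inv] by blast
  define S' where "S' = {v. h *v v = complex_of_real \<mu> *s v \<and> p *v v = v}"
  have S': "csubspace S'"
    by (auto simp: S'_def csubspace_def matrix_vector_right_distrib mvec_scale vec_eq_iff algebra_simps)
  have inv': "\<forall>T\<in>commutant A. \<forall>v\<in>S'. T *v v \<in> S'"
  proof (intro ballI)
    fix T v assume T: "T \<in> commutant A" and v: "v \<in> S'"
    have "h ** T = T ** h" using comm_elem[OF T hA] .
    moreover have "p ** T = T ** p" using comm_elem[OF T pA] .
    ultimately show "T *v v \<in> S'" using v
      by (simp add: S'_def matrix_vector_mul_assoc mvec_scale) (metis matrix_vector_mul_assoc mvec_scale)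
  qed
  obtain P where PA: "P \<in> A" and Pp: "isproj P" and PS: "\<forall>v. P *v v \<in> S'" and Pid: "\<forall>v\<in>S'. P *v v = v"
    using proj_in_vn[OF vn S' inv'] by blast
  have "p ** P = P" using PS by (simp add: mat_eq_iff S'_def matrix_vector_mul_assoc[symmetric])
  moreover have "w \<in> S'" using wS hw by (simp add: S'_def S_def rng_def)
  then have "P *v w = w" using Pid by blast
  then have "P \<noteq> 0" using ww by auto
  ultimately have Pe: "P = p" using minproj_D(5)[OF mp PA Pp] by blast
  have "h *v x = complex_of_real \<mu> *s (p *v x)" for x
  proof -
    have "p *v x \<in> S'" using PS Pe by metis
    then have "h *v (p *v x) = complex_of_real \<mu> *s (p *v x)" by (simp add: S'_def)
    then show ?thesis by (simp add: mv_eq[OF hp])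
  qed
  then have "h = smat (complex_of_real \<mu>) p" by (simp add: mat_eq_iff smat_mvec)
  then show ?thesis by blast
qed

lemma corner_scalar:
  fixes A :: "(complex^'n::finite^'n) set"
  assumes vn: "von_neumann_algebra A" and mp: "minproj A p" and xA: "x \<in> A"
  shows "\<exists>c. p ** x ** p = smat c p"
proof -
  have pA: "p \<in> A" and pa: "cadj p = p" and pp: "p ** p = p"
    using mp by (auto simp: minproj_D)
  define y where "y = p ** x ** p"
  have yA: "y \<in> A" unfolding y_def using vn pA xA by (intro vn_mult) auto
  have ya: "cadj y = p ** cadj x ** p" by (simp add: y_def cadj_mult pa matrix_mul_assoc)
  have yc: "p ** y ** p = y" by (simp add: y_def matrix_mul_assoc pp pp_right[OF pp])
  have yac: "p ** cadj y ** p = cadj y" by (simp add: ya matrix_mul_assoc pp pp_right[OF pp])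
  define h1 where "h1 = smat (1/2) (y + cadj y)"
  define h2 where "h2 = smat (-\<i>/2) (y - cadj y)"
  have h1A: "h1 \<in> A" unfolding h1_def using vn yA vn_adj by (intro vn_smat vn_add) auto
  have h2A: "h2 \<in> A" unfolding h2_def using vn yA vn_adj by (intro vn_smat vn_diff) auto
  have h1a: "cadj h1 = h1" by (simp add: h1_def cadj_smat cadj_add add.commute)
  have h2a: "cadj h2 = h2" by (simp add: h2_def cadj_def vec_eq_iff smat_def algebra_simps)
  have h1c: "p ** h1 ** p = h1"
    by (simp add: h1_def smat_mult_left smat_mult_right mm_add_left mm_add_right yc yac)
  have h2c: "p ** h2 ** p = h2"
    by (simp add: h2_def smat_mult_left smat_mult_right mm_diff_left mm_diff_right yc yac)
  obtain \<mu>1 :: real where m1: "h1 = smat (complex_of_real \<mu>1) p"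
    using herm_in_corner[OF vn mp h1A h1a h1c] by blast
  obtain \<mu>2 :: real where m2: "h2 = smat (complex_of_real \<mu>2) p"
    using herm_in_corner[OF vn mp h2A h2a h2c] by blast
  have "y = h1 + smat \<i> h2"
    by (simp add: h1_def h2_def vec_eq_iff smat_def field_simps)
  also have "\<dots> = smat (complex_of_real \<mu>1 + \<i> * complex_of_real \<mu>2) p"
    by (simp add: m1 m2 vec_eq_iff smat_def algebra_simps)
  finally show ?thesis unfolding y_def by blast
qed


lemma factor_vn: "factor A \<Longrightarrow> von_neumann_algebra A"
  by (simp add: factor_def)

lemma scale_fix: "c *s (u::complex^'n::finite) = u \<Longrightarrow> u \<noteq> 0 \<Longrightarrow> c = 1"
proof -
  assume a: "c *s u = u" "u \<noteq> 0"
  then obtain i where "u $ i \<noteq> 0" by (metis vec_eq_iff zero_index)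
  moreover have "c * u $ i = u $ i" using a(1) by (metis vector_scalar_mult_def vec_lambda_beta)
  ultimately show "c = 1" by simp
qed

lemma factor_nonzero:
  fixes A :: "(complex^'n::finite^'n) set"
  assumes fac: "factor A" and p: "minproj A p" and q: "minproj A q"
  shows "\<exists>x\<in>A. q ** x ** p \<noteq> 0"
proof (rule ccontr)
  assume "\<not> ?thesis"
  then have z: "\<forall>x\<in>A. q ** x ** p = 0" by blast
  have vn: "von_neumann_algebra A" using fac by (rule factor_vn)
  have pA: "p \<in> A" and pa: "cadj p = p" and p0: "p \<noteq> 0" using p by (auto simp: minproj_D)
  have qA: "q \<in> A" and qa: "cadj q = q" and q0: "q \<noteq> 0" using q by (auto simp: minproj_D)
  have z2: "p ** a ** q = 0" if a: "a \<in> A" for a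
  proof -
    have "q ** cadj a ** p = 0" using z vn_adj[OF vn a] by blast
    then have "cadj (q ** cadj a ** p) = 0" by simp
    then show ?thesis by (simp add: cadj_mult pa qa matrix_mul_assoc)
  qed
  define N where "N = {u. \<forall>a\<in>A. p *v (a *v u) = 0}"
  have N: "csubspace N"
    by (auto simp: N_def csubspace_def matrix_vector_right_distrib mvec_scale)
  define TT where "TT = A \<union> commutant A"
  have inv: "\<forall>T\<in>TT. \<forall>v\<in>N. T *v v \<in> N"
  proof (intro ballI)
    fix T v assume T: "T \<in> TT" and v: "v \<in> N"
    have "\<forall>a\<in>A. p *v (a *v (T *v v)) = 0"
    proof
      fix a assume a: "a \<in> A"
      show "p *v (a *v (T *v v)) = 0"
      proof (cases "T \<in> A")
        case True
        then have "a ** T \<in> A" using vn a by (intro vn_mult)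
        then show ?thesis using v by (simp add: N_def matrix_vector_mul_assoc)
      next
        case False
        then have Tc: "T \<in> commutant A" using T TT_def by blast
        have "p *v (a *v (T *v v)) = p *v (T *v (a *v v))"
          using comm_elem[OF Tc a] by (metis matrix_vector_mul_assoc)
        also have "\<dots> = T *v (p *v (a *v v))"
          using comm_elem[OF Tc pA] by (metis matrix_vector_mul_assoc)
        finally show ?thesis using v a by (simp add: N_def)
      qed
    qed
    then show "T *v v \<in> N" by (simp add: N_def)
  qed
  have adjc: "\<forall>T\<in>TT. cadj T \<in> TT" using vn_adj[OF vn] vn_comm_adj[OF vn] by (auto simp: TT_def)
  obtain P where Pa: "cadj P = P" and PP: "P ** P = P" and PN: "\<forall>v. P *v v \<in> N"
    and Pid: "\<forall>v\<in>N. P *v v = v" and Pc: "\<forall>T\<in>TT. T ** P = P ** T"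
    using proj_exists[OF N inv adjc] by blast
  have "P \<in> commutant A" using Pc by (auto simp: TT_def commutant_def)
  moreover have "P \<in> commutant (commutant A)" using Pc by (auto simp: TT_def commutant_def)
  then have "P \<in> A" using vn_eq[OF vn] by simp
  ultimately have "P \<in> range mat" using fac by (auto simp: factor_def)
  then obtain c where Pc: "P = mat c" by blast
  have qN: "q *v v \<in> N" for v
    using z2 by (simp add: N_def matrix_vector_mul_assoc)
  obtain v where qv: "q *v v \<noteq> 0" using nonzero_mat_vec[OF q0] by blast
  have "c *s (q *v v) = q *v v" using Pid qN Pc by (metis mvec_mat)
  then have "c = 1" using qv by (rule scale_fix)
  then have "\<forall>v. v \<in> N" using PN Pc by (metis matrix_vector_mul_lid)
  then have "p *v v = 0" for v using vn_mat[OF vn, of 1] by (simp add: N_def) (metis matrix_vector_mul_lid)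
  then have "p = 0" by (simp add: mat_eq_iff)
  then show False using p0 by simp
qed

lemma equiv_minproj:
  fixes A :: "(complex^'n::finite^'n) set"
  assumes fac: "factor A" and p: "minproj A p" and q: "minproj A q"
  shows "\<exists>v\<in>A. cadj v ** v = p \<and> v ** cadj v = q"
proof -
  have vn: "von_neumann_algebra A" using fac by (rule factor_vn)
  have pA: "p \<in> A" and pa: "cadj p = p" and pp: "p ** p = p" and p0: "p \<noteq> 0"
    using p by (auto simp: minproj_D)
  have qA: "q \<in> A" and qa: "cadj q = q" and qq: "q ** q = q" and q0: "q \<noteq> 0"
    using q by (auto simp: minproj_D)
  obtain x where xA: "x \<in> A" and znz: "q ** x ** p \<noteq> 0" using factor_nonzero[OF fac p q] by blast
  define z where "z = q ** x ** p"
  have zA: "z \<in> A" unfolding z_def using vn xA pA qA by (intro vn_mult) auto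
  have zp: "z ** p = z" by (simp add: z_def pp_right[OF pp])
  have qz: "q ** z = z" by (simp add: z_def matrix_mul_assoc qq)
  have "cadj z ** z = p ** (cadj x ** q ** x) ** p"
    by (simp add: z_def cadj_mult pa qa matrix_mul_assoc pp_right[OF qq])
  moreover have "cadj x ** q ** x \<in> A" using vn xA qA vn_adj by (intro vn_mult) auto
  ultimately obtain c where zz: "cadj z ** z = smat c p" using corner_scalar[OF vn p] by metis
  have c0: "c \<noteq> 0"
  proof
    assume "c = 0"
    then have "cadj z ** z = 0" using zz by simp
    then have "z = 0" by (simp add: adj_zero_iff)
    then show False using znz z_def by simp
  qed
  obtain w0 where "p *v w0 \<noteq> 0" using nonzero_mat_vec[OF p0] by blast
  define w where "w = p *v w0"
  have w0': "w \<noteq> 0" using \<open>p *v w0 \<noteq> 0\<close> w_def by simp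
  have pw: "p *v w = w" by (simp add: w_def mv_eq[OF pp])
  have "cinner (z *v w) (z *v w) = cinner w ((cadj z ** z) *v w)"
    by (simp add: cinner_adj matrix_vector_mul_assoc)
  also have "\<dots> = c * cinner w w" by (simp add: zz smat_mvec pw cinner_scale_right)
  finally have ce: "complex_of_real ((norm (z *v w))^2) = c * complex_of_real ((norm w)^2)"
    by (simp add: cinner_self_norm)
  define r where "r = (norm (z *v w))^2 / (norm w)^2"
  have nw: "(norm w)^2 > 0" using w0' by simp
  have cr: "c = complex_of_real r" using ce nw by (simp add: r_def field_simps)
  have r0: "r > 0" using c0 cr r_def nw by (simp add: less_le)
  define v where "v = smat (complex_of_real (1 / sqrt r)) z"
  have vA: "v \<in> A" unfolding v_def using vn zA by (rule vn_smat)
  have vv: "cadj v ** v = p"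
  proof -
    have "cadj v ** v = smat (complex_of_real (1 / sqrt r) * complex_of_real (1 / sqrt r)) (cadj z ** z)"
      by (simp add: v_def cadj_smat smat_mult_left smat_mult_right smat_smat)
    also have "\<dots> = smat (complex_of_real (1/r) * c) p"
      using r0 by (simp add: zz smat_smat of_real_mult[symmetric] real_sqrt_mult[symmetric])
    also have "\<dots> = p" using r0 cr by simp
    finally show ?thesis .
  qed
  have vp: "v ** p = v" by (simp add: v_def smat_mult_left zp)
  have qv: "q ** v = v" by (simp add: v_def smat_mult_right qz)
  define e where "e = v ** cadj v"
  have eA: "e \<in> A" unfolding e_def using vn vA vn_adj by (intro vn_mult) auto
  have ea: "cadj e = e" by (simp add: e_def cadj_mult)
  have ee: "e ** e = e"
  proof -
    have "e ** e = v ** (cadj v ** v) ** cadj v" by (simp add: e_def matrix_mul_assoc)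
    then show ?thesis by (simp add: vv vp e_def)
  qed
  have e0: "e \<noteq> 0"
  proof
    assume "e = 0"
    then have "cadj (cadj v) ** cadj v = 0" by (simp add: e_def)
    then have "cadj v = 0" using adj_zero_iff[of "cadj v"] by simp
    then have "cadj v ** v = 0" by simp
    then show False using vv p0 by simp
  qed
  have qe: "q ** e = e" by (simp add: e_def matrix_mul_assoc qv)
  have "e = q" using minproj_D(5)[OF q eA _ e0 qe] ea ee by (simp add: isproj_def)
  then show ?thesis using vA vv e_def by blast
qed

lemma proj_family:
  fixes A :: "(complex^'n::finite^'n) set"
  assumes vn: "von_neumann_algebra A"
  shows "r \<in> A \<Longrightarrow> isproj r \<Longrightarrow> \<exists>Q. finite Q \<and> (\<forall>q\<in>Q. minproj A q)
    \<and> (\<forall>q\<in>Q. \<forall>q'\<in>Q. q \<noteq> q' \<longrightarrow> q ** q' = 0) \<and> sum id Q = r \<and> (\<forall>q\<in>Q. r ** q = q)"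
proof (induction "rk r" arbitrary: r rule: less_induct)
  case less
  show ?case
  proof (cases "r = 0")
    case True then show ?thesis by (intro exI[of _ "{}"]) simp
  next
    case False
    obtain p where p: "minproj A p" and rp: "r ** p = p"
      using minproj_below[OF less.prems(1,2) False] by blast
    have pA: "p \<in> A" and pa: "cadj p = p" and pp: "p ** p = p" and p0: "p \<noteq> 0"
      using p by (auto simp: minproj_D)
    have ra: "cadj r = r" and rr: "r ** r = r" using less.prems by (auto simp: isproj_def)
    have pr: "p ** r = p" using proj_le_comm[OF less.prems(2) _ rp] pa pp by (simp add: isproj_def)
    define r' where "r' = r - p"
    have r'A: "r' \<in> A" unfolding r'_def using vn less.prems pA by (intro vn_diff) auto
    have r'p: "isproj r'" unfolding isproj_def r'_def
      by (simp add: cadj_diff ra pa mm_diff_left mm_diff_right rr rp pr pp)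
    have rr': "r ** r' = r'" by (simp add: r'_def mm_diff_right rr rp)
    have ne: "r' \<noteq> r" using p0 r'_def by simp
    have "rk r' < rk r" using rk_less[OF less.prems(2) r'p rr' ne] .
    then obtain Q' where fQ: "finite Q'" and mQ: "\<forall>q\<in>Q'. minproj A q"
      and oQ: "\<forall>q\<in>Q'. \<forall>q'\<in>Q'. q \<noteq> q' \<longrightarrow> q ** q' = 0" and sQ: "sum id Q' = r'"
      and lQ: "\<forall>q\<in>Q'. r' ** q = q"
      using less.hyps r'A r'p by blast
    have pr': "p ** r' = 0" by (simp add: r'_def mm_diff_right pr pp)
    have pq: "p ** q = 0" if "q \<in> Q'" for q
    proof -
      have "p ** q = p ** (r' ** q)" using lQ that by simp
      also have "\<dots> = 0" by (simp add: matrix_mul_assoc pr')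
      finally show ?thesis .
    qed
    have qp: "q ** p = 0" if "q \<in> Q'" for q
    proof -
      have "cadj q = q" using mQ that minproj_D(2) by blast
      then have "cadj (p ** q) = q ** p" by (simp add: cadj_mult pa)
      then show ?thesis using pq[OF that] by simp
    qed
    have pQ: "p \<notin> Q'" using pq pp p0 by force
    have "r ** q = q" if "q \<in> Q'" for q
    proof -
      have "r ** q = r ** (r' ** q)" using lQ that by simp
      also have "\<dots> = r' ** q" by (simp add: matrix_mul_assoc rr')
      finally show ?thesis using lQ that by simp
    qed
    moreover have "sum id (insert p Q') = r" using fQ pQ sQ r'_def by simp
    ultimately show ?thesis using fQ mQ oQ p pq qp rp pQ
      by (intro exI[of _ "insert p Q'"]) auto
  qed
qed


lemma assoc_rule: "A ** B = C \<Longrightarrow> X ** A ** B = X ** C"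
  by (metis matrix_mul_assoc)

lemma pisom:
  fixes V :: "complex^'n::finite^'n"
  assumes VV: "cadj V ** V = p" and VVa: "V ** cadj V = q" and pp: "p ** p = p"
  shows "V ** p = V" "q ** V = V" "cadj V ** q = cadj V" "p ** cadj V = cadj V"
proof -
  have pa: "cadj p = p" using VV by (metis cadj_mult cadj_cadj)
  define D where "D = V - V ** p"
  have "cadj D ** D = 0"
    by (simp add: D_def cadj_diff cadj_mult pa mm_diff_left mm_diff_right matrix_mul_assoc
        VV assoc_rule[OF VV] pp assoc_rule[OF pp])
  then have "D = 0" by (simp add: adj_zero_iff)
  then show 1: "V ** p = V" by (simp add: D_def)
  have "q ** V = V ** (cadj V ** V)" by (simp add: VVa[symmetric] matrix_mul_assoc)
  then show 2: "q ** V = V" using 1 VV by simp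
  have "cadj (q ** V) = cadj V" using 2 by simp
  moreover have qa: "cadj q = q" using VVa by (metis cadj_mult cadj_cadj)
  ultimately show "cadj V ** q = cadj V" by (simp add: cadj_mult)
  have "cadj (V ** p) = cadj V" using 1 by simp
  then show "p ** cadj V = cadj V" by (simp add: cadj_mult pa)
qed

lemma sum_id_res: "sum id Q = mat 1 \<Longrightarrow> (\<Sum>q\<in>Q. q *v w) = (w::complex^'n::finite)"
proof -
  assume "sum id Q = mat 1"
  then have "(sum id Q) *v w = w" by simp
  then show ?thesis by (simp add: mvec_sum_left)
qed

lemma basis_ext:
  fixes M N :: "complex^'n::finite^'m::finite"
  assumes span: "\<forall>w. w = (\<Sum>q\<in>Q. \<Sum>k\<in>K. cinner (e q k) w *s e q k)"
    and eq: "\<forall>q\<in>Q. \<forall>k\<in>K. M *v e q k = N *v e q k"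
  shows "M = N"
proof -
  have "M *v w = N *v w" for w
  proof -
    have "M *v w = M *v (\<Sum>q\<in>Q. \<Sum>k\<in>K. cinner (e q k) w *s e q k)" using span by metis
    also have "\<dots> = (\<Sum>q\<in>Q. \<Sum>k\<in>K. cinner (e q k) w *s (M *v e q k))" by (simp add: mvec_sum mvec_scale)
    also have "\<dots> = (\<Sum>q\<in>Q. \<Sum>k\<in>K. cinner (e q k) w *s (N *v e q k))" using eq by simp
    also have "\<dots> = N *v (\<Sum>q\<in>Q. \<Sum>k\<in>K. cinner (e q k) w *s e q k)" by (simp add: mvec_sum mvec_scale)
    finally show ?thesis using span by metis
  qed
  then show ?thesis by (simp add: mat_eq_iff)
qed

lemma factor_structure:
  fixes A :: "(complex^'n::finite^'n) set"
  assumes fac: "factor A"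
  shows "\<exists>(Q::(complex^'n^'n) set) (K::(complex^'n) set) e E F.
    finite Q \<and> finite K \<and> Q \<noteq> {} \<and> K \<noteq> {} \<and>
    (\<forall>q\<in>Q. \<forall>k\<in>K. \<forall>q'\<in>Q. \<forall>k'\<in>K. cinner (e q k) (e q' k') = (if q = q' \<and> k = k' then 1 else 0)) \<and>
    (\<forall>w. w = (\<Sum>q\<in>Q. \<Sum>k\<in>K. cinner (e q k) w *s e q k)) \<and>
    (\<forall>q\<in>Q. \<forall>q'\<in>Q. E q q' \<in> A \<and> cadj (E q q') = E q' q \<and>
        (\<forall>q''\<in>Q. \<forall>k\<in>K. E q q' *v e q'' k = (if q' = q'' then e q k else 0))) \<and>
    (\<forall>k\<in>K. \<forall>k'\<in>K. F k k' \<in> commutant A \<and> cadj (F k k') = F k' k \<and>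
        (\<forall>q\<in>Q. \<forall>k''\<in>K. F k k' *v e q k'' = (if k' = k'' then e q k else 0)))"
proof -
  have vn: "von_neumann_algebra A" using fac by (rule factor_vn)
  have m1: "mat 1 \<in> A" by (rule vn_mat[OF vn])
  have m2: "isproj (mat 1 :: complex^'n^'n)" by (simp add: isproj_def)
  from proj_family[OF vn m1 m2] obtain Q where Qp: "finite Q \<and> (\<forall>q\<in>Q. minproj A q)
    \<and> (\<forall>q\<in>Q. \<forall>q'\<in>Q. q \<noteq> q' \<longrightarrow> q ** q' = 0) \<and> sum id Q = mat 1 \<and> (\<forall>q\<in>Q. mat 1 ** q = q)"
    by (elim exE)
  have fQ: "finite Q" and mQ: "\<forall>q\<in>Q. minproj A q"
    and oQ: "\<forall>q\<in>Q. \<forall>q'\<in>Q. q \<noteq> q' \<longrightarrow> q ** q' = 0" and sQ: "sum id Q = mat 1"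
    using Qp by auto
  have Qne: "Q \<noteq> {}" using sQ mat_one_neq0 by force
  then obtain q0 where q0Q: "q0 \<in> Q" by blast
  have q0: "minproj A q0" using mQ q0Q by blast
  have q0A: "q0 \<in> A" and q0a: "cadj q0 = q0" and q0q0: "q0 ** q0 = q0" and q00: "q0 \<noteq> 0"
    using q0 by (auto simp: minproj_D)
  have "\<forall>q\<in>Q. \<exists>v\<in>A. cadj v ** v = q0 \<and> v ** cadj v = q"
    using equiv_minproj[OF fac q0] mQ by blast
  then obtain V where VA: "\<And>q. q \<in> Q \<Longrightarrow> V q \<in> A"
    and VV: "\<And>q. q \<in> Q \<Longrightarrow> cadj (V q) ** V q = q0"
    and VVa: "\<And>q. q \<in> Q \<Longrightarrow> V q ** cadj (V q) = q"
    by metis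
  have Vq0: "V q ** q0 = V q" and qV: "q ** V q = V q" and Vaq: "cadj (V q) ** q = cadj (V q)"
    and q0Va: "q0 ** cadj (V q) = cadj (V q)" if "q \<in> Q" for q
    using pisom[OF VV[OF that] VVa[OF that] q0q0] by auto
  have VVo: "cadj (V q) ** V q' = (if q = q' then q0 else 0)" if "q \<in> Q" "q' \<in> Q" for q q'
  proof (cases "q = q'")
    case True then show ?thesis using VV that by simp
  next
    case False
    have "cadj (V q) ** V q' = (cadj (V q) ** q) ** (q' ** V q')" using Vaq qV that by simp
    also have "\<dots> = cadj (V q) ** (q ** q') ** V q'" by (simp add: matrix_mul_assoc)
    also have "\<dots> = 0" using oQ that False by simp
    finally show ?thesis using False by simp
  qed
  have "cadj (0::complex^'n^'n) = 0" by simp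
  moreover have "\<forall>v\<in>rng q0. (0::complex^'n^'n) *v v \<in> rng q0" by (simp add: rng_def)
  ultimately obtain K where fK: "finite K" and Kr: "K \<subseteq> rng q0" and oK: "orthonormal K"
    and spK: "\<forall>v\<in>rng q0. v = (\<Sum>k\<in>K. cinner k v *s k)"
    using onb_exists[OF rng_csubspace, of 0 q0] by blast
  have Kne: "K \<noteq> {}"
  proof
    assume "K = {}"
    then have "q0 *v v = 0" for v using spK by (simp add: rng_def mv_eq[OF q0q0])
    then show False using q00 nonzero_mat_vec by blast
  qed
  have q0k: "q0 *v k = k" if "k \<in> K" for k using Kr that by (auto simp: rng_def)
  define e where "e q k = V q *v k" for q k
  have ortho: "cinner (e q k) (e q' k') = (if q = q' \<and> k = k' then 1 else 0)"
    if "q \<in> Q" "k \<in> K" "q' \<in> Q" "k' \<in> K" for q k q' k'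
  proof -
    have "cinner (e q k) (e q' k') = cinner k ((cadj (V q) ** V q') *v k')"
      by (simp add: e_def cinner_adj matrix_vector_mul_assoc)
    also have "\<dots> = (if q = q' then cinner k k' else 0)"
      using VVo[of q q'] that q0k by simp
    also have "\<dots> = (if q = q' \<and> k = k' then 1 else 0)"
      using oK that by (auto simp: orthonormal_def)
    finally show ?thesis .
  qed
  have span: "\<forall>w. w = (\<Sum>q\<in>Q. \<Sum>k\<in>K. cinner (e q k) w *s e q k)"
  proof
    fix w
    have "w = (\<Sum>q\<in>Q. q *v w)" using sum_id_res[OF sQ] by simp
    also have "\<dots> = (\<Sum>q\<in>Q. \<Sum>k\<in>K. cinner (e q k) w *s e q k)"
    proof (rule sum.cong[OF refl])
      fix q assume qQ: "q \<in> Q"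
      have r: "cadj (V q) *v w \<in> rng q0" by (simp add: rng_def mv_eq[OF q0Va[OF qQ]])
      have "q *v w = V q *v (cadj (V q) *v w)" using VVa[OF qQ] by (simp add: matrix_vector_mul_assoc)
      also have "\<dots> = V q *v (\<Sum>k\<in>K. cinner k (cadj (V q) *v w) *s k)" using spK r by metis
      also have "\<dots> = (\<Sum>k\<in>K. cinner (e q k) w *s e q k)"
        by (simp add: mvec_sum mvec_scale e_def cinner_adj)
      finally show "q *v w = (\<Sum>k\<in>K. cinner (e q k) w *s e q k)" .
    qed
    finally show "w = (\<Sum>q\<in>Q. \<Sum>k\<in>K. cinner (e q k) w *s e q k)" .
  qed
  define E where "E q q' = V q ** cadj (V q')" for q q'
  have Eprops: "E q q' \<in> A \<and> cadj (E q q') = E q' q \<and>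
        (\<forall>q''\<in>Q. \<forall>k\<in>K. E q q' *v e q'' k = (if q' = q'' then e q k else 0))"
    if "q \<in> Q" "q' \<in> Q" for q q'
  proof (intro conjI ballI)
    show "E q q' \<in> A" unfolding E_def using vn VA that vn_adj by (intro vn_mult) auto
    show "cadj (E q q') = E q' q" by (simp add: E_def cadj_mult)
    fix q'' k assume q'': "q'' \<in> Q" and k: "k \<in> K"
    have "E q q' *v e q'' k = V q *v ((cadj (V q') ** V q'') *v k)"
      by (simp add: E_def e_def matrix_vector_mul_assoc matrix_mul_assoc)
    then show "E q q' *v e q'' k = (if q' = q'' then e q k else 0)"
      using VVo[OF that(2) q''] q0k[OF k] by (simp add: e_def)
  qed
  have act: "\<exists>\<gamma>. \<forall>q''\<in>Q. \<forall>k\<in>K. a *v e q'' k = (\<Sum>q\<in>Q. \<gamma> q q'' *s e q k)" if aA: "a \<in> A" for a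
  proof -
    have "\<forall>q\<in>Q. \<forall>q''\<in>Q. \<exists>c. q0 ** (cadj (V q) ** a ** V q'') ** q0 = smat c q0"
      using corner_scalar[OF vn q0] vn VA vn_adj aA by (metis vn_mult)
    then obtain \<gamma> where g: "\<And>q q''. q \<in> Q \<Longrightarrow> q'' \<in> Q \<Longrightarrow> q0 ** (cadj (V q) ** a ** V q'') ** q0 = smat (\<gamma> q q'') q0"
      by metis
    have g2: "cadj (V q) ** a ** V q'' = smat (\<gamma> q q'') q0" if "q \<in> Q" "q'' \<in> Q" for q q''
    proof -
      have "q0 ** (cadj (V q) ** a ** V q'') ** q0 = (q0 ** cadj (V q)) ** a ** (V q'' ** q0)"
        by (simp add: matrix_mul_assoc)
      then show ?thesis using g[OF that] q0Va[OF that(1)] Vq0[OF that(2)] by simp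
    qed
    have "a *v e q'' k = (\<Sum>q\<in>Q. \<gamma> q q'' *s e q k)" if q'': "q'' \<in> Q" and k: "k \<in> K" for q'' k
    proof -
      have "a *v e q'' k = (\<Sum>q\<in>Q. q *v (a *v e q'' k))"
        using sum_id_res[OF sQ] by simp
      also have "\<dots> = (\<Sum>q\<in>Q. \<gamma> q q'' *s e q k)"
      proof (rule sum.cong[OF refl])
        fix q assume qQ: "q \<in> Q"
        have "q *v (a *v e q'' k) = V q *v ((cadj (V q) ** a ** V q'') *v k)"
          using VVa[OF qQ] by (simp add: e_def matrix_vector_mul_assoc matrix_mul_assoc)
        also have "\<dots> = \<gamma> q q'' *s e q k"
          using g2[OF qQ q''] q0k[OF k] by (simp add: smat_mvec mvec_scale e_def)
        finally show "q *v (a *v e q'' k) = \<gamma> q q'' *s e q k" .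
      qed
      finally show ?thesis .
    qed
    then show ?thesis by blast
  qed
  define F where "F k k' = (\<Sum>q\<in>Q. outer (e q k) (e q k'))" for k k'
  have Fact: "F k k' *v e q k'' = (if k' = k'' then e q k else 0)"
    if "k \<in> K" "k' \<in> K" "q \<in> Q" "k'' \<in> K" for k k' q k''
  proof -
    have "F k k' *v e q k'' = (\<Sum>q'\<in>Q. cinner (e q' k') (e q k'') *s e q' k)"
      by (simp add: F_def mvec_sum_left outer_mvec)
    also have "\<dots> = (\<Sum>q'\<in>Q. if q' = q then (if k' = k'' then e q k else 0) else 0)"
      using that by (intro sum.cong) (auto simp: ortho)
    also have "\<dots> = (if k' = k'' then e q k else 0)" using fQ that by simp
    finally show ?thesis .
  qed
  have Fprops: "F k k' \<in> commutant A \<and> cadj (F k k') = F k' k \<and>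
        (\<forall>q\<in>Q. \<forall>k''\<in>K. F k k' *v e q k'' = (if k' = k'' then e q k else 0))"
    if kK: "k \<in> K" "k' \<in> K" for k k'
  proof (intro conjI ballI)
    show "cadj (F k k') = F k' k" by (simp add: F_def cadj_sum cadj_outer)
    show "F k k' *v e q k'' = (if k' = k'' then e q k else 0)" if "q \<in> Q" "k'' \<in> K" for q k''
      using Fact kK that by blast
    have "a ** F k k' = F k k' ** a" if aA: "a \<in> A" for a
    proof -
      obtain \<gamma> where g: "\<forall>q''\<in>Q. \<forall>k\<in>K. a *v e q'' k = (\<Sum>q\<in>Q. \<gamma> q q'' *s e q k)"
        using act[OF aA] by blast
      show ?thesis
      proof (rule basis_ext[OF span], intro ballI)
        fix q'' k'' assume q'': "q'' \<in> Q" and k'': "k'' \<in> K"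
        have "(a ** F k k') *v e q'' k'' = a *v (if k' = k'' then e q'' k else 0)"
          by (simp add: matrix_vector_mul_assoc[symmetric] Fact kK q'' k'')
        also have "\<dots> = (if k' = k'' then (\<Sum>q\<in>Q. \<gamma> q q'' *s e q k) else 0)"
          using g q'' kK by simp
        also have "\<dots> = (\<Sum>q\<in>Q. \<gamma> q q'' *s (F k k' *v e q k''))"
          using Fact kK k'' by (simp add: sum.neutral)
        also have "\<dots> = (F k k' ** a) *v e q'' k''"
          by (simp add: matrix_vector_mul_assoc[symmetric] g q'' k'' mvec_sum mvec_scale)
        finally show "(a ** F k k') *v e q'' k'' = (F k k' ** a) *v e q'' k''" .
      qed
    qed
    then show "F k k' \<in> commutant A" by (simp add: commutant_def)
  qed
  show ?thesis
    apply (rule exI[of _ Q], rule exI[of _ K], rule exI[of _ e], rule exI[of _ E], rule exI[of _ F])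
    using fQ fK Qne Kne ortho span Eprops Fprops by blast
qed


lemma sum_UNIV_prod: "(\<Sum>p\<in>(UNIV::('a::finite \<times> 'b::finite) set). f p) = (\<Sum>i\<in>UNIV. \<Sum>j\<in>UNIV. f (i,j))"
  using sum.cartesian_product[of "\<lambda>i j. f (i,j)" UNIV UNIV] by (simp add: case_prod_beta')

lemma tensor_op_mvec: "tensor_op A B *v tensor_vec a b = tensor_vec (A *v a) (B *v b)"
  by (simp add: tensor_op_def tensor_vec_def matrix_vector_mult_def vec_eq_iff sum_UNIV_prod
      sum_product mult_ac)

lemma tensor_op_mult: "tensor_op A B ** tensor_op C D = tensor_op (A ** C) (B ** D)"
  by (simp add: tensor_op_def matrix_matrix_mult_def vec_eq_iff sum_UNIV_prod sum_product mult_ac)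

lemma cadj_tensor: "cadj (tensor_op A B) = tensor_op (cadj A) (cadj B)"
  by (simp add: tensor_op_def cadj_def vec_eq_iff)

lemma tensor_vec_scale1: "tensor_vec (c *s a) b = c *s tensor_vec a b"
  by (simp add: tensor_vec_def vec_eq_iff mult_ac)

lemma tensor_vec_zero1[simp]: "tensor_vec 0 b = 0"
  by (simp add: tensor_vec_def vec_eq_iff)

definition contrR :: "complex^('l::finite \<times> 'r::finite) \<Rightarrow> complex^'r \<Rightarrow> complex^'l" where
  "contrR \<psi> \<beta> = (\<chi> i. \<Sum>j\<in>UNIV. \<psi> $ (i,j) * cnj (\<beta> $ j))"

definition contrL :: "complex^('l::finite \<times> 'r::finite) \<Rightarrow> complex^'l \<Rightarrow> complex^'r" where
  "contrL \<psi> \<alpha> = (\<chi> j. \<Sum>i\<in>UNIV. \<psi> $ (i,j) * cnj (\<alpha> $ i))"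

lemma contrR_tensor: "contrR (tensor_vec a b) \<beta> = cinner \<beta> b *s a"
  by (simp add: contrR_def tensor_vec_def cinner_def vec_eq_iff sum_distrib_left sum_distrib_right mult_ac)
lemma contrL_tensor: "contrL (tensor_vec a b) \<alpha> = cinner \<alpha> a *s b"
  by (simp add: contrL_def tensor_vec_def cinner_def vec_eq_iff sum_distrib_left sum_distrib_right mult_ac)
lemma contrR_scale: "contrR (c *s \<psi>) \<beta> = c *s contrR \<psi> \<beta>"
  by (simp add: contrR_def vec_eq_iff sum_distrib_left mult_ac)
lemma contrL_scale: "contrL (c *s \<psi>) \<beta> = c *s contrL \<psi> \<beta>"
  by (simp add: contrL_def vec_eq_iff sum_distrib_left mult_ac)
lemma contrR_sum: "contrR (sum f S) \<beta> = (\<Sum>s\<in>S. contrR (f s) \<beta>)"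
  by (induct S rule: infinite_finite_induct)
     (auto simp: contrR_def vec_eq_iff sum.distrib distrib_right)
lemma contrL_sum: "contrL (sum f S) \<beta> = (\<Sum>s\<in>S. contrL (f s) \<beta>)"
  by (induct S rule: infinite_finite_induct)
     (auto simp: contrL_def vec_eq_iff sum.distrib distrib_right)

lemma sum_delta_on:
  assumes "finite M" "m \<in> M" "\<forall>m\<in>M. \<forall>m'\<in>M. cinner (b m) (b m') = (if m = m' then 1 else 0)"
  shows "(\<Sum>m'\<in>M. cinner (b m) (b m') *s (v m' :: complex^'n::finite)) = v m"
proof -
  have "(\<Sum>m'\<in>M. cinner (b m) (b m') *s v m') = (\<Sum>m'\<in>M. if m = m' then v m' else 0)"
    using assms(2,3) by (intro sum.cong) auto
  then show ?thesis using assms(1,2) by simp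
qed

lemma eig_from_tensor_left:
  fixes \<psi> :: "complex^('l::finite \<times> 'r::finite)"
  assumes fM: "finite M" and lam: "\<forall>m\<in>M. lam m \<noteq> 0"
    and ob: "\<forall>m\<in>M. \<forall>m'\<in>M. cinner (b m) (b m') = (if m = m' then 1 else 0)"
    and psi: "\<psi> = (\<Sum>m\<in>M. lam m *s tensor_vec (a m) (b m))"
    and eig: "tensor_op T (mat 1) *v \<psi> = c *s \<psi>"
    and m: "m \<in> M"
  shows "T *v a m = c *s a m"
proof -
  have T\<psi>: "tensor_op T (mat 1) *v \<psi> = (\<Sum>m\<in>M. lam m *s tensor_vec (T *v a m) (b m))"
    by (simp add: psi mvec_sum mvec_scale tensor_op_mvec)
  have "contrR \<psi> (b m) = (\<Sum>m'\<in>M. cinner (b m) (b m') *s (lam m' *s a m'))"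
    by (simp add: psi contrR_sum contrR_scale contrR_tensor vector_smult_assoc mult.commute)
  also have "\<dots> = lam m *s a m" by (rule sum_delta_on[OF fM m ob])
  finally have c1: "contrR \<psi> (b m) = lam m *s a m" .
  have "contrR (tensor_op T (mat 1) *v \<psi>) (b m) = (\<Sum>m'\<in>M. cinner (b m) (b m') *s (lam m' *s (T *v a m')))"
    by (simp add: T\<psi> contrR_sum contrR_scale contrR_tensor vector_smult_assoc mult.commute)
  also have "\<dots> = lam m *s (T *v a m)" by (rule sum_delta_on[OF fM m ob])
  finally have c2: "contrR (tensor_op T (mat 1) *v \<psi>) (b m) = lam m *s (T *v a m)" .
  have "lam m *s (T *v a m) = lam m *s (c *s a m)"
    using c1 c2 eig by (simp add: contrR_scale vector_smult_assoc mult.commute)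
  then have "(1 / lam m) *s (lam m *s (T *v a m)) = (1 / lam m) *s (lam m *s (c *s a m))" by simp
  then show ?thesis using lam m by (simp add: vector_smult_assoc)
qed

lemma eig_from_tensor_right:
  fixes \<psi> :: "complex^('l::finite \<times> 'r::finite)"
  assumes fM: "finite M" and lam: "\<forall>m\<in>M. lam m \<noteq> 0"
    and oa: "\<forall>m\<in>M. \<forall>m'\<in>M. cinner (a m) (a m') = (if m = m' then 1 else 0)"
    and psi: "\<psi> = (\<Sum>m\<in>M. lam m *s tensor_vec (a m) (b m))"
    and eig: "tensor_op (mat 1) T *v \<psi> = c *s \<psi>"
    and m: "m \<in> M"
  shows "T *v b m = c *s b m"
proof -
  have T\<psi>: "tensor_op (mat 1) T *v \<psi> = (\<Sum>m\<in>M. lam m *s tensor_vec (a m) (T *v b m))"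
    by (simp add: psi mvec_sum mvec_scale tensor_op_mvec)
  have "contrL \<psi> (a m) = (\<Sum>m'\<in>M. cinner (a m) (a m') *s (lam m' *s b m'))"
    by (simp add: psi contrL_sum contrL_scale contrL_tensor vector_smult_assoc mult.commute)
  also have "\<dots> = lam m *s b m" by (rule sum_delta_on[OF fM m oa])
  finally have c1: "contrL \<psi> (a m) = lam m *s b m" .
  have "contrL (tensor_op (mat 1) T *v \<psi>) (a m) = (\<Sum>m'\<in>M. cinner (a m) (a m') *s (lam m' *s (T *v b m')))"
    by (simp add: T\<psi> contrL_sum contrL_scale contrL_tensor vector_smult_assoc mult.commute)
  also have "\<dots> = lam m *s (T *v b m)" by (rule sum_delta_on[OF fM m oa])
  finally have c2: "contrL (tensor_op (mat 1) T *v \<psi>) (a m) = lam m *s (T *v b m)" .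
  have "lam m *s (T *v b m) = lam m *s (c *s b m)"
    using c1 c2 eig by (simp add: contrL_scale vector_smult_assoc mult.commute)
  then have "(1 / lam m) *s (lam m *s (T *v b m)) = (1 / lam m) *s (lam m *s (c *s b m))" by simp
  then show ?thesis using lam m by (simp add: vector_smult_assoc)
qed

definition cnjv :: "complex^'n::finite \<Rightarrow> complex^'n" where
  "cnjv x = (\<chi> i. cnj (x $ i))"

lemma schmidt:
  fixes \<psi> :: "complex^('l::finite \<times> 'r::finite)"
  shows "\<exists>(M::(complex^'r) set) lam a b. finite M \<and> (\<forall>m\<in>M. lam m \<noteq> 0) \<and>
     (\<forall>m\<in>M. \<forall>m'\<in>M. cinner (a m) (a m') = (if m = m' then 1 else 0)) \<and>
     (\<forall>m\<in>M. \<forall>m'\<in>M. cinner (b m) (b m') = (if m = m' then 1 else 0)) \<and>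
     \<psi> = (\<Sum>m\<in>M. lam m *s tensor_vec (a m :: complex^'l) (b m :: complex^'r))"
proof -
  define C :: "complex^'r^'l" where "C = (\<chi> i j. \<psi> $ (i,j))"
  define h where "h = cadj C ** C"
  have hh: "cadj h = h" by (simp add: h_def cadj_mult)
  have U: "csubspace (UNIV :: (complex^'r) set)" by (simp add: csubspace_def)
  have inv: "\<forall>v\<in>UNIV. h *v v \<in> UNIV" by simp
  from onb_exists[OF U hh inv] obtain D where D: "finite D \<and> D \<subseteq> UNIV \<and> orthonormal D
    \<and> (\<forall>v\<in>UNIV. v = (\<Sum>d\<in>D. cinner d v *s d)) \<and> (\<forall>d\<in>D. \<exists>\<mu>::real. h *v d = complex_of_real \<mu> *s d)"
    by (elim exE)
  have fD: "finite D" and oD: "orthonormal D"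
    and spD: "\<And>v. v = (\<Sum>d\<in>D. cinner d v *s d)"
    and eD: "\<forall>d\<in>D. \<exists>\<mu>::real. h *v d = complex_of_real \<mu> *s d"
    using D by auto
  have delta: "(\<Sum>d\<in>D. d $ k * cnj (d $ j)) = (if j = k then 1 else 0)" for j k
  proof -
    have "axis j 1 $ k = (\<Sum>d\<in>D. cinner d (axis j 1) *s d) $ k"
      using arg_cong[where f="\<lambda>x. x $ k", OF spD[of "axis j 1"]] .
    then have "axis j 1 $ k = (\<Sum>d\<in>D. cinner d (axis j 1) * d $ k)" by simp
    moreover have "cinner d (axis j 1) = cnj (d $ j)" for d
      by (simp add: cinner_def axis_def if_distrib if_distribR cong: if_cong)
    ultimately have "(if k = j then 1 else 0) = (\<Sum>d\<in>D. d $ k * cnj (d $ j))"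
      by (simp add: axis_def mult.commute)
    then show ?thesis by (cases "j = k") auto
  qed
  have psiD: "\<psi> = (\<Sum>d\<in>D. tensor_vec (C *v d) (cnjv d))"
  proof -
    have "(\<Sum>d\<in>D. tensor_vec (C *v d) (cnjv d)) $ (i,j) = \<psi> $ (i,j)" for i j
    proof -
      have "(\<Sum>d\<in>D. tensor_vec (C *v d) (cnjv d)) $ (i,j) = (\<Sum>d\<in>D. \<Sum>k\<in>UNIV. \<psi> $ (i,k) * d $ k * cnj (d $ j))"
        by (simp add: tensor_vec_def cnjv_def matrix_vector_mult_def C_def sum_distrib_right)
      also have "\<dots> = (\<Sum>k\<in>UNIV. \<psi> $ (i,k) * (\<Sum>d\<in>D. d $ k * cnj (d $ j)))"
        by (subst sum.swap) (simp add: sum_distrib_left mult_ac)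
      also have "\<dots> = \<psi> $ (i,j)" by (simp add: delta if_distrib if_distribR cong: if_cong)
      finally show ?thesis .
    qed
    then show ?thesis by (simp add: vec_eq_iff)
  qed
  define M where "M = {d\<in>D. C *v d \<noteq> 0}"
  define lam where "lam d = complex_of_real (norm (C *v d))" for d
  define a where "a d = complex_of_real (1 / norm (C *v d)) *s (C *v d)" for d
  have fM: "finite M" using fD M_def by simp
  have "\<psi> = (\<Sum>d\<in>M. tensor_vec (C *v d) (cnjv d))"
    unfolding psiD M_def using fD by (intro sum.mono_neutral_right) auto
  also have "\<dots> = (\<Sum>d\<in>M. lam d *s tensor_vec (a d) (cnjv d))"
  proof (rule sum.cong[OF refl])
    fix d assume "d \<in> M"
    then have "norm (C *v d) \<noteq> 0" by (simp add: M_def)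
    then show "tensor_vec (C *v d) (cnjv d) = lam d *s tensor_vec (a d) (cnjv d)"
      by (simp add: lam_def a_def tensor_vec_scale1[symmetric] vector_smult_assoc)
  qed
  finally have psiM: "\<psi> = (\<Sum>d\<in>M. lam d *s tensor_vec (a d) (cnjv d))" .
  have lam0: "\<forall>m\<in>M. lam m \<noteq> 0" by (simp add: M_def lam_def)
  have oa: "\<forall>m\<in>M. \<forall>m'\<in>M. cinner (a m) (a m') = (if m = m' then 1 else 0)"
  proof (intro ballI)
    fix m m' assume m: "m \<in> M" and m': "m' \<in> M"
    show "cinner (a m) (a m') = (if m = m' then 1 else 0)"
    proof (cases "m = m'")
      case True then show ?thesis using m unit_vec[of "C *v m"] by (simp add: a_def M_def)
    next
      case False
      obtain \<mu> :: real where "h *v m' = complex_of_real \<mu> *s m'" using eD m' M_def by blast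
      then have "cinner (C *v m) (C *v m') = complex_of_real \<mu> * cinner m m'"
        by (simp add: cinner_adj h_def matrix_vector_mul_assoc[symmetric] cinner_scale_right)
      also have "\<dots> = 0" using oD m m' False by (simp add: orthonormal_def M_def)
      finally show ?thesis using False by (simp add: a_def cinner_scale_left cinner_scale_right)
    qed
  qed
  have ob: "\<forall>m\<in>M. \<forall>m'\<in>M. cinner (cnjv m) (cnjv m') = (if m = m' then 1 else 0)"
    using oD by (auto simp: cnjv_def cnj_vec_cinner orthonormal_def M_def)
  show ?thesis using fM lam0 oa ob psiM by blast
qed


lemma reindex_final:
  fixes X :: "complex^'h::finite^('l::finite \<times> 'r::finite)"
    and e :: "'q \<Rightarrow> 'k \<Rightarrow> complex^'h" and f :: "'q \<Rightarrow> 'm \<Rightarrow> complex^'l"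
    and g :: "'k \<Rightarrow> 'm \<Rightarrow> complex^'r" and lam :: "'m \<Rightarrow> complex"
  assumes fQ: "finite Q" and fK: "finite K" and fM: "finite M"
    and oe: "\<forall>q\<in>Q. \<forall>k\<in>K. \<forall>q'\<in>Q. \<forall>k'\<in>K. cinner (e q k) (e q' k') = (if q = q' \<and> k = k' then 1 else 0)"
    and sp: "\<forall>w. w = (\<Sum>q\<in>Q. \<Sum>k\<in>K. cinner (e q k) w *s e q k)"
    and of: "\<forall>q\<in>Q. \<forall>m\<in>M. \<forall>q'\<in>Q. \<forall>m'\<in>M. cinner (f q m) (f q' m') = (if q = q' \<and> m = m' then 1 else 0)"
    and og: "\<forall>k\<in>K. \<forall>m\<in>M. \<forall>k'\<in>K. \<forall>m'\<in>M. cinner (g k m) (g k' m') = (if k = k' \<and> m = m' then 1 else 0)"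
    and Xe: "\<forall>q\<in>Q. \<forall>k\<in>K. X *v e q k = (\<Sum>m\<in>M. lam m *s tensor_vec (f q m) (g k m))"
  shows "\<exists>(L::nat set) (R::nat set) (M::nat set)
           (e :: nat \<Rightarrow> nat \<Rightarrow> complex^'h) (f :: nat \<Rightarrow> nat \<Rightarrow> complex^'l)
           (g :: nat \<Rightarrow> nat \<Rightarrow> complex^'r) (lam :: nat \<Rightarrow> complex).
           finite L \<and> finite R \<and> finite M \<and>
           (\<forall>p\<in>L \<times> R. \<forall>q\<in>L \<times> R.
              cinner (e (fst p) (snd p)) (e (fst q) (snd q)) = (if p = q then 1 else 0)) \<and>
           (\<forall>v :: complex^'h. \<exists>c :: nat \<Rightarrow> nat \<Rightarrow> complex.
              v = (\<Sum>p\<in>L \<times> R. c (fst p) (snd p) *s e (fst p) (snd p))) \<and>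
           (\<forall>p\<in>L \<times> M. \<forall>q\<in>L \<times> M.
              cinner (f (fst p) (snd p)) (f (fst q) (snd q)) = (if p = q then 1 else 0)) \<and>
           (\<forall>p\<in>R \<times> M. \<forall>q\<in>R \<times> M.
              cinner (g (fst p) (snd p)) (g (fst q) (snd q)) = (if p = q then 1 else 0)) \<and>
           (\<forall>l\<in>L. \<forall>r\<in>R.
              X *v e l r = (\<Sum>m\<in>M. lam m *s tensor_vec (f l m) (g r m)))"
proof -
  obtain hq where hq: "bij_betw hq {0..<card Q} Q" using ex_bij_betw_nat_finite[OF fQ] by blast
  obtain hk where hk: "bij_betw hk {0..<card K} K" using ex_bij_betw_nat_finite[OF fK] by blast
  obtain hm where hm: "bij_betw hm {0..<card M} M" using ex_bij_betw_nat_finite[OF fM] by blast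
  define L' where "L' = {0..<card Q}"
  define R' where "R' = {0..<card K}"
  define M' where "M' = {0..<card M}"
  define e' where "e' i j = e (hq i) (hk j)" for i j
  define f' where "f' i m = f (hq i) (hm m)" for i m
  define g' where "g' j m = g (hk j) (hm m)" for j m
  define lam' where "lam' m = lam (hm m)" for m
  have iq: "inj_on hq L'" and iQ: "hq ` L' = Q" using hq by (auto simp: bij_betw_def L'_def)
  have ik: "inj_on hk R'" and iK: "hk ` R' = K" using hk by (auto simp: bij_betw_def R'_def)
  have im: "inj_on hm M'" and iM: "hm ` M' = M" using hm by (auto simp: bij_betw_def M'_def)
  have c1: "\<forall>p\<in>L' \<times> R'. \<forall>p'\<in>L' \<times> R'. cinner (e' (fst p) (snd p)) (e' (fst p') (snd p')) = (if p = p' then 1 else 0)"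
  proof (intro ballI)
    fix p p' assume p: "p \<in> L' \<times> R'" and p': "p' \<in> L' \<times> R'"
    have "(hq (fst p) = hq (fst p') \<and> hk (snd p) = hk (snd p')) \<longleftrightarrow> p = p'"
      using p p' inj_onD[OF iq] inj_onD[OF ik] by (auto simp: prod_eq_iff)
    then show "cinner (e' (fst p) (snd p)) (e' (fst p') (snd p')) = (if p = p' then 1 else 0)"
      using oe p p' iQ iK unfolding e'_def by (metis SigmaE fst_conv snd_conv imageI)
  qed
  have c2: "\<forall>v. \<exists>c. v = (\<Sum>p\<in>L' \<times> R'. c (fst p) (snd p) *s e' (fst p) (snd p))"
  proof
    fix v
    have "(\<Sum>p\<in>L' \<times> R'. cinner (e' (fst p) (snd p)) v *s e' (fst p) (snd p))
        = (\<Sum>i\<in>L'. \<Sum>j\<in>R'. cinner (e (hq i) (hk j)) v *s e (hq i) (hk j))"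
      by (simp add: sum.cartesian_product e'_def case_prod_beta')
    also have "\<dots> = (\<Sum>i\<in>L'. \<Sum>k\<in>K. cinner (e (hq i) k) v *s e (hq i) k)"
      apply (rule sum.cong[OF refl])
      subgoal for i
        using sum.reindex_bij_betw[OF hk[folded R'_def], of "\<lambda>k. cinner (e (hq i) k) v *s e (hq i) k"] by simp
      done
    also have "\<dots> = (\<Sum>q\<in>Q. \<Sum>k\<in>K. cinner (e q k) v *s e q k)"
      using sum.reindex_bij_betw[OF hq[folded L'_def], of "\<lambda>q. \<Sum>k\<in>K. cinner (e q k) v *s e q k"] by simp
    also have "\<dots> = v" using sp[rule_format, of v] by (rule sym)
    finally have eqv: "(\<Sum>p\<in>L' \<times> R'. cinner (e' (fst p) (snd p)) v *s e' (fst p) (snd p)) = v" .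
    show "\<exists>c. v = (\<Sum>p\<in>L' \<times> R'. c (fst p) (snd p) *s e' (fst p) (snd p))"
      by (rule exI[of _ "\<lambda>i j. cinner (e' i j) v"]) (simp add: eqv)
  qed
  have c3: "\<forall>p\<in>L' \<times> M'. \<forall>p'\<in>L' \<times> M'. cinner (f' (fst p) (snd p)) (f' (fst p') (snd p')) = (if p = p' then 1 else 0)"
  proof (intro ballI)
    fix p p' assume p: "p \<in> L' \<times> M'" and p': "p' \<in> L' \<times> M'"
    have "(hq (fst p) = hq (fst p') \<and> hm (snd p) = hm (snd p')) \<longleftrightarrow> p = p'"
      using p p' inj_onD[OF iq] inj_onD[OF im] by (auto simp: prod_eq_iff)
    then show "cinner (f' (fst p) (snd p)) (f' (fst p') (snd p')) = (if p = p' then 1 else 0)"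
      using of p p' iQ iM unfolding f'_def by (metis SigmaE fst_conv snd_conv imageI)
  qed
  have c4: "\<forall>p\<in>R' \<times> M'. \<forall>p'\<in>R' \<times> M'. cinner (g' (fst p) (snd p)) (g' (fst p') (snd p')) = (if p = p' then 1 else 0)"
  proof (intro ballI)
    fix p p' assume p: "p \<in> R' \<times> M'" and p': "p' \<in> R' \<times> M'"
    have "(hk (fst p) = hk (fst p') \<and> hm (snd p) = hm (snd p')) \<longleftrightarrow> p = p'"
      using p p' inj_onD[OF ik] inj_onD[OF im] by (auto simp: prod_eq_iff)
    then show "cinner (g' (fst p) (snd p)) (g' (fst p') (snd p')) = (if p = p' then 1 else 0)"
      using og p p' iK iM unfolding g'_def by (metis SigmaE fst_conv snd_conv imageI)
  qed
  have c5: "\<forall>l\<in>L'. \<forall>r\<in>R'. X *v e' l r = (\<Sum>m\<in>M'. lam' m *s tensor_vec (f' l m) (g' r m))"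
  proof (intro ballI)
    fix l r assume l: "l \<in> L'" and r: "r \<in> R'"
    have "X *v e' l r = (\<Sum>m\<in>M. lam m *s tensor_vec (f (hq l) m) (g (hk r) m))"
      using Xe l r iQ iK unfolding e'_def by blast
    also have "\<dots> = (\<Sum>m\<in>M'. lam' m *s tensor_vec (f' l m) (g' r m))"
      using sum.reindex_bij_betw[OF hm[folded M'_def], of "\<lambda>m. lam m *s tensor_vec (f (hq l) m) (g (hk r) m)"]
      by (simp add: lam'_def f'_def g'_def)
    finally show "X *v e' l r = (\<Sum>m\<in>M'. lam' m *s tensor_vec (f' l m) (g' r m))" .
  qed
  have fin: "finite L'" "finite R'" "finite M'" by (auto simp: L'_def R'_def M'_def)
  show ?thesis
    apply (rule exI[of _ L'], rule exI[of _ R'], rule exI[of _ M'])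
    apply (rule exI[of _ e'], rule exI[of _ f'], rule exI[of _ g'], rule exI[of _ lam'])
    using fin c1 c2 c3 c4 c5 by blast
qed


lemma intertw: "X ** E = T ** X \<Longrightarrow> X *v (E *v w) = T *v (X *v w)"
  by (metis matrix_vector_mul_assoc)

lemma adj_intertw: "E ** cadj X = cadj X ** T \<Longrightarrow> X ** cadj E = cadj T ** X"
  by (metis cadj_mult cadj_cadj)

theorem mainTheorem13:
  fixes X :: "complex^'h::finite^('l::finite \<times> 'r::finite)"
  assumes "splitting_map X"
    and "balanced X"
    and "factor (stloc_L X)"
  shows "\<exists>(L::nat set) (R::nat set) (M::nat set)
           (e :: nat \<Rightarrow> nat \<Rightarrow> complex^'h) (f :: nat \<Rightarrow> nat \<Rightarrow> complex^'l)
           (g :: nat \<Rightarrow> nat \<Rightarrow> complex^'r) (lam :: nat \<Rightarrow> complex).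
           finite L \<and> finite R \<and> finite M \<and>
           (\<forall>p\<in>L \<times> R. \<forall>q\<in>L \<times> R.
              cinner (e (fst p) (snd p)) (e (fst q) (snd q)) = (if p = q then 1 else 0)) \<and>
           (\<forall>v :: complex^'h. \<exists>c :: nat \<Rightarrow> nat \<Rightarrow> complex.
              v = (\<Sum>p\<in>L \<times> R. c (fst p) (snd p) *s e (fst p) (snd p))) \<and>
           (\<forall>p\<in>L \<times> M. \<forall>q\<in>L \<times> M.
              cinner (f (fst p) (snd p)) (f (fst q) (snd q)) = (if p = q then 1 else 0)) \<and>
           (\<forall>p\<in>R \<times> M. \<forall>q\<in>R \<times> M.
              cinner (g (fst p) (snd p)) (g (fst q) (snd q)) = (if p = q then 1 else 0)) \<and>
           (\<forall>l\<in>L. \<forall>r\<in>R.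
              X *v e l r = (\<Sum>m\<in>M. lam m *s tensor_vec (f l m) (g r m)))"
proof -
  define A where "A = stloc_L X"
  have fac: "factor A" using assms(3) by (simp add: A_def)
  have bal: "stloc_R X = commutant A" using assms(2) by (simp add: balanced_def A_def)
  from factor_structure[OF fac] obtain Q :: "(complex^'h^'h) set" and K :: "(complex^'h) set" and e E F where H: "finite Q \<and> finite K \<and> Q \<noteq> {} \<and> K \<noteq> {} \<and>
    (\<forall>q\<in>Q. \<forall>k\<in>K. \<forall>q'\<in>Q. \<forall>k'\<in>K. cinner (e q k) (e q' k') = (if q = q' \<and> k = k' then 1 else 0)) \<and>
    (\<forall>w. w = (\<Sum>q\<in>Q. \<Sum>k\<in>K. cinner (e q k) w *s e q k)) \<and>
    (\<forall>q\<in>Q. \<forall>q'\<in>Q. E q q' \<in> A \<and> cadj (E q q') = E q' q \<and>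
        (\<forall>q''\<in>Q. \<forall>k\<in>K. E q q' *v e q'' k = (if q' = q'' then e q k else 0))) \<and>
    (\<forall>k\<in>K. \<forall>k'\<in>K. F k k' \<in> commutant A \<and> cadj (F k k') = F k' k \<and>
        (\<forall>q\<in>Q. \<forall>k''\<in>K. F k k' *v e q k'' = (if k' = k'' then e q k else 0)))"
    by (elim exE)
  have fQ: "finite Q" and fK: "finite K" and Qne: "Q \<noteq> {}" and Kne: "K \<noteq> {}"
    and oe: "\<forall>q\<in>Q. \<forall>k\<in>K. \<forall>q'\<in>Q. \<forall>k'\<in>K. cinner (e q k) (e q' k') = (if q = q' \<and> k = k' then 1 else 0)"
    and sp: "\<forall>w. w = (\<Sum>q\<in>Q. \<Sum>k\<in>K. cinner (e q k) w *s e q k)"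
    and EA: "\<And>q q'. q \<in> Q \<Longrightarrow> q' \<in> Q \<Longrightarrow> E q q' \<in> A"
    and Ea: "\<And>q q'. q \<in> Q \<Longrightarrow> q' \<in> Q \<Longrightarrow> cadj (E q q') = E q' q"
    and Ee: "\<And>q q' q'' k. q \<in> Q \<Longrightarrow> q' \<in> Q \<Longrightarrow> q'' \<in> Q \<Longrightarrow> k \<in> K \<Longrightarrow>
              E q q' *v e q'' k = (if q' = q'' then e q k else 0)"
    and FA: "\<And>k k'. k \<in> K \<Longrightarrow> k' \<in> K \<Longrightarrow> F k k' \<in> commutant A"
    and Fa: "\<And>k k'. k \<in> K \<Longrightarrow> k' \<in> K \<Longrightarrow> cadj (F k k') = F k' k"
    and Fe: "\<And>k k' q k''. k \<in> K \<Longrightarrow> k' \<in> K \<Longrightarrow> q \<in> Q \<Longrightarrow> k'' \<in> K \<Longrightarrow>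
              F k k' *v e q k'' = (if k' = k'' then e q k else 0)"
    using H by auto
  obtain q0 where q0: "q0 \<in> Q" using Qne by blast
  obtain k0 where k0: "k0 \<in> K" using Kne by blast
  have "\<forall>q\<in>Q. \<exists>T. E q q0 ** cadj X = cadj X ** tensor_op T (mat 1) \<and> X ** E q q0 = tensor_op T (mat 1) ** X"
    using EA q0 by (auto simp: A_def stloc_L_def)
  then obtain Et where Et1: "\<And>q. q \<in> Q \<Longrightarrow> E q q0 ** cadj X = cadj X ** tensor_op (Et q) (mat 1)"
    and Et2: "\<And>q. q \<in> Q \<Longrightarrow> X ** E q q0 = tensor_op (Et q) (mat 1) ** X"
    by metis
  have "\<forall>k\<in>K. \<exists>T. F k k0 ** cadj X = cadj X ** tensor_op (mat 1) T \<and> X ** F k k0 = tensor_op (mat 1) T ** X"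
    using FA k0 bal by (auto simp: stloc_R_def)
  then obtain Ft where Ft1: "\<And>k. k \<in> K \<Longrightarrow> F k k0 ** cadj X = cadj X ** tensor_op (mat 1) (Ft k)"
    and Ft2: "\<And>k. k \<in> K \<Longrightarrow> X ** F k k0 = tensor_op (mat 1) (Ft k) ** X"
    by metis
  define \<psi> where "\<psi> = X *v e q0 k0"
  from schmidt[of \<psi>] obtain M :: "(complex^'r) set" and lam a b where SM: "finite M \<and> (\<forall>m\<in>M. lam m \<noteq> 0) \<and>
     (\<forall>m\<in>M. \<forall>m'\<in>M. cinner (a m) (a m') = (if m = m' then 1 else 0)) \<and>
     (\<forall>m\<in>M. \<forall>m'\<in>M. cinner (b m) (b m') = (if m = m' then 1 else 0)) \<and>
     \<psi> = (\<Sum>m\<in>M. lam m *s tensor_vec (a m :: complex^'l) (b m :: complex^'r))"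
    by (elim exE)
  have fM: "finite M" and lam0: "\<forall>m\<in>M. lam m \<noteq> 0"
    and oa: "\<forall>m\<in>M. \<forall>m'\<in>M. cinner (a m) (a m') = (if m = m' then 1 else 0)"
    and ob: "\<forall>m\<in>M. \<forall>m'\<in>M. cinner (b m) (b m') = (if m = m' then 1 else 0)"
    and psi: "\<psi> = (\<Sum>m\<in>M. lam m *s tensor_vec (a m) (b m))"
    using SM by blast+
  define f where "f q m = Et q *v a m" for q m
  define g where "g k m = Ft k *v b m" for k m
  have Xe: "\<forall>q\<in>Q. \<forall>k\<in>K. X *v e q k = (\<Sum>m\<in>M. lam m *s tensor_vec (f q m) (g k m))"
  proof (intro ballI)
    fix q k assume q: "q \<in> Q" and k: "k \<in> K"
    have "e q k = E q q0 *v (F k k0 *v e q0 k0)" using Ee[OF q q0 q0 k] Fe[OF k k0 q0 k0] by simp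
    then have "X *v e q k = tensor_op (Et q) (mat 1) *v (tensor_op (mat 1) (Ft k) *v \<psi>)"
      using intertw[OF Et2[OF q]] intertw[OF Ft2[OF k]] by (simp add: \<psi>_def)
    also have "\<dots> = (\<Sum>m\<in>M. lam m *s tensor_vec (f q m) (g k m))"
      by (simp add: psi mvec_sum mvec_scale tensor_op_mvec f_def g_def)
    finally show "X *v e q k = (\<Sum>m\<in>M. lam m *s tensor_vec (f q m) (g k m))" .
  qed
  have of: "\<forall>q\<in>Q. \<forall>m\<in>M. \<forall>q'\<in>Q. \<forall>m'\<in>M. cinner (f q m) (f q' m') = (if q = q' \<and> m = m' then 1 else 0)"
  proof (intro ballI)
    fix q m q' m' assume q: "q \<in> Q" and m: "m \<in> M" and q': "q' \<in> Q" and m': "m' \<in> M"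
    define T where "T = cadj (Et q) ** Et q'"
    define c :: complex where "c = (if q = q' then 1 else 0)"
    have adjq: "X ** cadj (E q q0) = tensor_op (cadj (Et q)) (mat 1) ** X"
      using adj_intertw[OF Et1[OF q]] by (simp add: cadj_tensor)
    have "tensor_op T (mat 1) *v \<psi> = tensor_op (cadj (Et q)) (mat 1) *v (tensor_op (Et q') (mat 1) *v \<psi>)"
      by (simp add: T_def matrix_vector_mul_assoc tensor_op_mult)
    also have "\<dots> = tensor_op (cadj (Et q)) (mat 1) *v (X *v (E q' q0 *v e q0 k0))"
      using intertw[OF Et2[OF q']] by (simp add: \<psi>_def)
    also have "\<dots> = X *v (cadj (E q q0) *v (E q' q0 *v e q0 k0))"
      using intertw[OF adjq] by simp
    also have "\<dots> = X *v (E q0 q *v e q' k0)" using Ea[OF q q0] Ee[OF q' q0 q0 k0] by simp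
    also have "\<dots> = c *s \<psi>" using Ee[OF q0 q q' k0] by (simp add: c_def \<psi>_def)
    finally have "tensor_op T (mat 1) *v \<psi> = c *s \<psi>" .
    then have "T *v a m' = c *s a m'" by (rule eig_from_tensor_left[OF fM lam0 ob psi _ m'])
    then have "cinner (f q m) (f q' m') = c * cinner (a m) (a m')"
      by (simp add: f_def cinner_adj T_def matrix_vector_mul_assoc cinner_scale_right)
    then show "cinner (f q m) (f q' m') = (if q = q' \<and> m = m' then 1 else 0)"
      using oa m m' by (simp add: c_def)
  qed
  have og: "\<forall>k\<in>K. \<forall>m\<in>M. \<forall>k'\<in>K. \<forall>m'\<in>M. cinner (g k m) (g k' m') = (if k = k' \<and> m = m' then 1 else 0)"
  proof (intro ballI)
    fix k m k' m' assume k: "k \<in> K" and m: "m \<in> M" and k': "k' \<in> K" and m': "m' \<in> M"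
    define T where "T = cadj (Ft k) ** Ft k'"
    define c :: complex where "c = (if k = k' then 1 else 0)"
    have adjk: "X ** cadj (F k k0) = tensor_op (mat 1) (cadj (Ft k)) ** X"
      using adj_intertw[OF Ft1[OF k]] by (simp add: cadj_tensor)
    have "tensor_op (mat 1) T *v \<psi> = tensor_op (mat 1) (cadj (Ft k)) *v (tensor_op (mat 1) (Ft k') *v \<psi>)"
      by (simp add: T_def matrix_vector_mul_assoc tensor_op_mult)
    also have "\<dots> = tensor_op (mat 1) (cadj (Ft k)) *v (X *v (F k' k0 *v e q0 k0))"
      using intertw[OF Ft2[OF k']] by (simp add: \<psi>_def)
    also have "\<dots> = X *v (cadj (F k k0) *v (F k' k0 *v e q0 k0))"
      using intertw[OF adjk] by simp
    also have "\<dots> = X *v (F k0 k *v e q0 k')" using Fa[OF k k0] Fe[OF k' k0 q0 k0] by simp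
    also have "\<dots> = c *s \<psi>" using Fe[OF k0 k q0 k'] by (simp add: c_def \<psi>_def)
    finally have "tensor_op (mat 1) T *v \<psi> = c *s \<psi>" .
    then have "T *v b m' = c *s b m'" by (rule eig_from_tensor_right[OF fM lam0 oa psi _ m'])
    then have "cinner (g k m) (g k' m') = c * cinner (b m) (b m')"
      by (simp add: g_def cinner_adj T_def matrix_vector_mul_assoc cinner_scale_right)
    then show "cinner (g k m) (g k' m') = (if k = k' \<and> m = m' then 1 else 0)"
      using ob m m' by (simp add: c_def)
  qed
  show ?thesis by (rule reindex_final[OF fQ fK fM oe sp of og Xe])
qed


end
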